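(* Let $k\ge2$ be an integer and let $\alpha,\beta\in\mathbb{C}$ satisfy $|\alpha|^k<|\beta|\le|\alpha|^{k-1}$. Consider the automorphisms of $\mathbb{C}^2$ \[ F(z_1,z_2)=(\alpha z_1+z_2^2,\ \beta z_2),\qquad G(z_1,z_2)=(\beta z_1,\ \alpha z_2+z_1^k). \] Let $\{F_n\}_{n\ge1}$ be any sequence in which each $F_n$ is either $F$ or $G$. Then the non-autonomous basin of attraction of $\{F_n\}$ at the origin, \[ \{z\in\mathbb{C}^2: F_n\circ F_{n-1}\circ\cdots\circ F_1(z)\to0 \text{ as } n\to\infty\}, \] is biholomorphic to $\mathbb{C}^2$. *)

theory Defs
  imports "HOL-Analysis.Analysis"
begin

definition cscale2 :: "complex \<Rightarrow> complex \<times> complex \<Rightarrow> complex \<times> complex" where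
  "cscale2 c w = (c * fst w, c * snd w)"

text \<open>Holomorphic map C^2 -> C^2 on a set U: at every point of U it is (real) Frechet
 differentiable with complex-linear derivative.\<close>
definition holomorphic2_on ::
  "(complex \<times> complex \<Rightarrow> complex \<times> complex) \<Rightarrow> (complex \<times> complex) set \<Rightarrow> bool" where
  "holomorphic2_on f U \<longleftrightarrow>
     (\<forall>z\<in>U. \<exists>D. (f has_derivative D) (at z) \<and> (\<forall>c w. D (cscale2 c w) = cscale2 c (D w)))"

definition biholomorphic_to_C2 :: "(complex \<times> complex) set \<Rightarrow> bool" where
  "biholomorphic_to_C2 \<Omega> \<longleftrightarrow> open \<Omega> \<and>
     (\<exists>\<Phi>. bij_betw \<Phi> \<Omega> UNIV \<and> holomorphic2_on \<Phi> \<Omega> \<and> holomorphic2_on (inv_into \<Omega> \<Phi>) UNIV)"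

text \<open>Forward compositions F_n o ... o F_1 (sequence indexed from 1; comp_seq fs 0 = id).\<close>
fun comp_seq :: "(nat \<Rightarrow> ('a \<Rightarrow> 'a)) \<Rightarrow> nat \<Rightarrow> 'a \<Rightarrow> 'a" where
  "comp_seq fs 0 = id"
| "comp_seq fs (Suc n) = fs (Suc n) \<circ> comp_seq fs n"

definition nonaut_basin :: "(nat \<Rightarrow> (complex \<times> complex \<Rightarrow> complex \<times> complex)) \<Rightarrow> (complex \<times> complex) set" where
  "nonaut_basin fs = {z. (\<lambda>n. comp_seq fs n z) \<longlonglongrightarrow> 0}"

end

theory Submission
  imports Defs
begin


definition clin :: "(complex \<times> complex \<Rightarrow> complex \<times> complex) \<Rightarrow> bool" where
  "clin D \<longleftrightarrow> (\<forall>c w. D (cscale2 c w) = cscale2 c (D w))"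

lemma clin_id: "clin id" by (simp add: clin_def)
lemma clin_comp: "clin f \<Longrightarrow> clin g \<Longrightarrow> clin (f \<circ> g)" unfolding clin_def comp_def by metis

lemma telescope_conv:
  fixes X :: "nat \<Rightarrow> 'a::banach"
  assumes dX: "\<And>n. norm (X (Suc n) - X n) \<le> d n" and sd: "summable d"
  shows "X \<longlonglongrightarrow> lim X" and "\<And>n. norm (lim X - X n) \<le> suminf d - sum d {..<n}"
proof -
  have d0: "\<And>n. 0 \<le> d n" using dX norm_ge_zero order_trans by blast
  have step: "norm (X (n + j) - X n) \<le> sum d {n..<n+j}" for n j
  proof (induction j)
    case 0 then show ?case by simp
  next
    case (Suc j)
    have "norm (X (n + Suc j) - X n) \<le> norm (X (Suc (n+j)) - X (n+j)) + norm (X (n+j) - X n)"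
      using norm_triangle_ineq[of "X (Suc (n+j)) - X (n+j)" "X (n+j) - X n"] by simp
    also have "\<dots> \<le> d (n+j) + sum d {n..<n+j}" using dX Suc by (intro add_mono) auto
    also have "\<dots> = sum d {n..<n + Suc j}" by simp
    finally show ?case .
  qed
  have tail: "sum d {n..<m} \<le> suminf d - sum d {..<n}" if "n \<le> m" for n m
  proof -
    have "sum d {..<m} = sum d {..<n} + sum d {n..<m}" using that
      by (metis atLeast0LessThan sum.atLeastLessThan_concat zero_le)
    moreover have "sum d {..<m} \<le> suminf d" using sd d0 by (intro sum_le_suminf) auto
    ultimately show ?thesis by simp
  qed
  have bnd: "norm (X m - X n) \<le> suminf d - sum d {..<n}" if "n \<le> m" for n m
    using step[of n "m - n"] tail[OF that] that by simp
  have T0: "(\<lambda>n. suminf d - sum d {..<n}) \<longlonglongrightarrow> 0"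
    using tendsto_diff[OF tendsto_const[of "suminf d"] summable_LIMSEQ[OF sd]] by simp
  have "Cauchy X"
  proof (rule metric_CauchyI)
    fix e :: real assume e: "e > 0"
    then have "\<forall>\<^sub>F n in sequentially. suminf d - sum d {..<n} < e/2"
      using T0 by (intro order_tendstoD) auto
    then obtain N where N: "suminf d - sum d {..<N} < e/2" by (auto simp: eventually_sequentially)
    show "\<exists>M. \<forall>m\<ge>M. \<forall>n\<ge>M. dist (X m) (X n) < e"
    proof (intro exI allI impI)
      fix m n assume "N \<le> m" "N \<le> n"
      have "dist (X m) (X n) \<le> norm (X m - X N) + norm (X n - X N)"
        by (metis dist_norm dist_triangle2)
      also have "\<dots> < e" using bnd[OF \<open>N \<le> m\<close>] bnd[OF \<open>N \<le> n\<close>] N by simp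
      finally show "dist (X m) (X n) < e" .
    qed
  qed
  then show conv: "X \<longlonglongrightarrow> lim X" using Cauchy_convergent_iff convergent_LIMSEQ_iff by blast
  fix n
  have "(\<lambda>m. norm (X m - X n)) \<longlonglongrightarrow> norm (lim X - X n)"
    by (intro tendsto_intros conv)
  then show "norm (lim X - X n) \<le> suminf d - sum d {..<n}"
    by (rule LIMSEQ_le_const2) (use bnd in auto)
qed

fun dcomp :: "(nat \<Rightarrow> 'a \<Rightarrow> 'a \<Rightarrow> 'a) \<Rightarrow> (nat \<Rightarrow> 'a \<Rightarrow> 'a) \<Rightarrow> nat \<Rightarrow> 'a \<Rightarrow> 'a \<Rightarrow> 'a" where
  "dcomp DP P 0 x = id"
| "dcomp DP P (Suc n) x = DP n (comp_seq P n x) \<circ> dcomp DP P n x"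

lemma clin_lim:
  assumes "\<And>h. (\<lambda>n. D n h) \<longlonglongrightarrow> L h" "\<And>n. clin (D n)"
  shows "clin L"
  unfolding clin_def
proof (intro allI)
  fix c w
  have "(\<lambda>n. D n (cscale2 c w)) \<longlonglongrightarrow> L (cscale2 c w)" by (rule assms(1))
  moreover have "(\<lambda>n. D n (cscale2 c w)) = (\<lambda>n. cscale2 c (D n w))"
  proof
    fix n show "D n (cscale2 c w) = cscale2 c (D n w)" using assms(2)[of n] unfolding clin_def by blast
  qed
  moreover have "(\<lambda>n. cscale2 c (D n w)) \<longlonglongrightarrow> cscale2 c (L w)"
    unfolding cscale2_def by (intro tendsto_intros assms(1))
  ultimately show "L (cscale2 c w) = cscale2 c (L w)" using LIMSEQ_unique by metis
qed

lemma aux32: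
  fixes a x :: "'a::real_normed_vector" and s :: real
  assumes "norm (a - x) \<le> 2 * s * norm x" "s \<le> 1/4"
  shows "norm a \<le> 3/2 * norm x"
proof -
  have "2 * s * norm x \<le> 1/2 * norm x" using mult_right_mono[OF _ norm_ge_zero, of "2 * s" "1/2" x] assms(2) by simp
  moreover have "norm a \<le> norm x + norm (a - x)" using norm_triangle_sub[of a x] by simp
  ultimately show ?thesis using assms(1) by linarith
qed

lemma aux_step:
  fixes a b c d e s :: real
  assumes "a \<le> d * b" "b \<le> 3/2 * c" "0 \<le> d" "e \<le> 2 * s * c" "0 \<le> c"
  shows "a + e \<le> 2 * (s + d) * c"
proof -
  have "d * b \<le> d * (3/2 * c)" using assms(2,3) by (rule mult_left_mono)
  moreover have "d * (3/2 * c) \<le> 2 * d * c" using assms(3,5) by simp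
  ultimately show ?thesis using assms(1,4) by (simp add: algebra_simps)
qed

lemma near_id:
  fixes P :: "nat \<Rightarrow> complex\<times>complex \<Rightarrow> complex\<times>complex"
    and DP :: "nat \<Rightarrow> complex\<times>complex \<Rightarrow> complex\<times>complex \<Rightarrow> complex\<times>complex"
  assumes R: "R > 0"
    and P0: "\<And>n. P (Suc n) 0 = 0"
    and dP: "\<And>n w. norm w \<le> R \<Longrightarrow> (P (Suc n) has_derivative DP n w) (at w)"
    and cl: "\<And>n w. norm w \<le> R \<Longrightarrow> clin (DP n w)"
    and bd: "\<And>n w h. norm w \<le> R \<Longrightarrow> norm (DP n w h - h) \<le> \<delta> n * norm h"
    and sd: "summable \<delta>" and s4: "suminf \<delta> \<le> 1/4" and d0: "\<And>n. 0 \<le> \<delta> n"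
  obtains Vl DV where
    "\<And>x. x \<in> ball 0 (R/2) \<Longrightarrow> (\<lambda>n. comp_seq P n x) \<longlonglongrightarrow> Vl x"
    "\<And>x. x \<in> ball 0 (R/2) \<Longrightarrow> (Vl has_derivative DV x) (at x)"
    "\<And>x. x \<in> ball 0 (R/2) \<Longrightarrow> clin (DV x)"
    "\<And>x h. x \<in> ball 0 (R/2) \<Longrightarrow> norm (DV x h - h) \<le> 1/2 * norm h"
    "\<And>x n. x \<in> ball 0 (R/2) \<Longrightarrow> norm (comp_seq P n x) \<le> 3/2 * norm x"
    "\<And>x y. x \<in> ball 0 (R/2) \<Longrightarrow> y \<in> ball 0 (R/2) \<Longrightarrow> norm ((Vl x - x) - (Vl y - y)) \<le> 1/2 * norm (x - y)"
    "\<And>y. norm y < R/8 \<Longrightarrow> \<exists>x\<in>ball 0 (R/2). Vl x = y"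
proof -
  define s where "s n = sum \<delta> {..<n}" for n
  have s_le: "s n \<le> 1/4" for n
    unfolding s_def using sum_le_suminf[OF sd, of "{..<n}"] d0 s4 by auto
  have s0: "0 \<le> s n" for n unfolding s_def using d0 by (simp add: sum_nonneg)
  have sSuc: "s (Suc n) = s n + \<delta> n" for n unfolding s_def by simp
  have L1: "norm ((P (Suc n) w - w) - (P (Suc n) w' - w')) \<le> \<delta> n * norm (w - w')"
    if "norm w \<le> R" "norm w' \<le> R" for n w w'
  proof (rule differentiable_bound[where f="\<lambda>w. P (Suc n) w - w" and f'="\<lambda>w h. DP n w h - h" and S="cball 0 R"])
    show "convex (cball (0::complex\<times>complex) R)" by simp
    show "((\<lambda>w. P (Suc n) w - w) has_derivative (\<lambda>h. DP n x h - h)) (at x within cball 0 R)"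
      if "x \<in> cball 0 R" for x
    proof -
      have "norm x \<le> R" using that by simp
      from has_derivative_at_withinI[OF dP[OF this, of n]]
      show ?thesis by (rule has_derivative_diff[OF _ has_derivative_ident])
    qed
    show "onorm (\<lambda>h. DP n x h - h) \<le> \<delta> n" if "x \<in> cball 0 R" for x
      using that bd by (intro onorm_le) auto
  qed (use that in auto)
  have L1': "norm (P (Suc n) w - w) \<le> \<delta> n * norm w" if "norm w \<le> R" for n w
    using L1[OF that, of 0] R P0 by simp
  have V0: "comp_seq P n 0 = 0" for n by (induction n) (auto simp: P0)
  have L2: "norm (comp_seq P n x - x) \<le> 2 * s n * norm x" if "norm x \<le> R/2" for n x
  proof (induction n)
    case 0 then show ?case by (simp add: s_def)
  next
    case (Suc n)
    let ?w = "comp_seq P n x"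
    have nw: "norm ?w \<le> 3/2 * norm x" using aux32[OF Suc s_le] .
    then have nwR: "norm ?w \<le> R" using that R norm_ge_zero[of x] by linarith
    have "norm (comp_seq P (Suc n) x - x) \<le> norm (P (Suc n) ?w - ?w) + norm (?w - x)"
      using norm_triangle_ineq[of "P (Suc n) ?w - ?w" "?w - x"] by simp
    also have "\<dots> \<le> 2 * (s n + \<delta> n) * norm x"
      by (rule aux_step[OF L1'[OF nwR, of n] nw d0[of n] Suc norm_ge_zero])
    finally show ?case by (simp add: sSuc)
  qed
  have L2': "norm (comp_seq P n x) \<le> 3/2 * norm x" if "norm x \<le> R/2" for n x
    using aux32[OF L2[OF that, of n] s_le] .
  let ?D = "dcomp DP P"
  have L3: "(comp_seq P n has_derivative ?D n x) (at x)" if "norm x < R/2" for n x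
  proof (induction n)
    case 0 then show ?case by (simp add: has_derivative_ident id_def)
  next
    case (Suc n)
    have "norm (comp_seq P n x) \<le> R" using L2'[of x n, OF less_imp_le[OF that]] R that by linarith
    then have "((\<lambda>y. P (Suc n) (comp_seq P n y)) has_derivative (\<lambda>y. DP n (comp_seq P n x) (?D n x y))) (at x)"
      by (intro has_derivative_compose[OF Suc dP])
    then show ?case by (simp add: o_def)
  qed
  have L4: "clin (?D n x) \<and> (\<forall>h. norm (?D n x h - h) \<le> 2 * s n * norm h)" if "norm x < R/2" for n x
  proof (induction n)
    case 0 then show ?case using clin_id by (simp add: s_def id_def)
  next
    case (Suc n)
    have wR: "norm (comp_seq P n x) \<le> R" using L2'[of x n, OF less_imp_le[OF that]] R that by linarith
    have "clin (?D (Suc n) x)" using Suc cl[OF wR, of n] by (simp add: clin_comp)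
    moreover have "norm (?D (Suc n) x h - h) \<le> 2 * s (Suc n) * norm h" for h
    proof -
      let ?u = "?D n x h"
      have nu: "norm ?u \<le> 3/2 * norm h" using aux32[OF _ s_le] Suc by blast
      have "norm (?D (Suc n) x h - h) \<le> norm (DP n (comp_seq P n x) ?u - ?u) + norm (?u - h)"
        using norm_triangle_ineq[of "DP n (comp_seq P n x) ?u - ?u" "?u - h"] by simp
      also have "\<dots> \<le> 2 * (s n + \<delta> n) * norm h"
        using Suc by (intro aux_step[OF bd[OF wR, of n ?u] nu d0[of n] _ norm_ge_zero]) blast
      finally show ?thesis by (simp add: sSuc)
    qed
    ultimately show ?case by blast
  qed
  have L5: "norm (?D (Suc n) x h - ?D n x h) \<le> (2 * norm h) * \<delta> n" if "norm x < R/2" for n x h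
  proof -
    let ?u = "?D n x h"
    have wR: "norm (comp_seq P n x) \<le> R" using L2'[of x n, OF less_imp_le[OF that]] R that by linarith
    have nu: "norm ?u \<le> 3/2 * norm h"
      using L4[OF that, of n] aux32[OF _ s_le] by blast
    have "norm (?D (Suc n) x h - ?D n x h) = norm (DP n (comp_seq P n x) ?u - ?u)" by simp
    also have "\<dots> \<le> \<delta> n * norm ?u" using bd[OF wR] by blast
    also have "\<dots> \<le> \<delta> n * (2 * norm h)" using nu d0[of n] norm_ge_zero[of h]
      by (intro mult_left_mono) linarith+
    finally show ?thesis by (simp add: algebra_simps)
  qed
  define g' where "g' x h = lim (\<lambda>n. ?D n x h)" for x h
  have sd2: "summable (\<lambda>n. (2 * norm h) * \<delta> n)" for h :: "complex\<times>complex"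
    using sd by (rule summable_mult)
  have L6: "(\<lambda>n. ?D n x h) \<longlonglongrightarrow> g' x h" and
    L6': "norm (g' x h - ?D n x h) \<le> 2 * norm h * (suminf \<delta> - s n)" if "norm x < R/2" for x h n
  proof -
    show "(\<lambda>n. ?D n x h) \<longlonglongrightarrow> g' x h" unfolding g'_def
      by (rule telescope_conv(1)[OF L5[OF that] sd2])
    have "norm (g' x h - ?D n x h) \<le> (\<Sum>n. 2 * norm h * \<delta> n) - (\<Sum>j<n. 2 * norm h * \<delta> j)"
      unfolding g'_def by (rule telescope_conv(2)[OF L5[OF that] sd2])
    also have "\<dots> = 2 * norm h * (suminf \<delta> - s n)"
      using suminf_mult[OF sd, of "2 * norm h"] by (simp add: s_def sum_distrib_left algebra_simps)
    finally show "norm (g' x h - ?D n x h) \<le> 2 * norm h * (suminf \<delta> - s n)" .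
  qed
  have Ts: "(\<lambda>n. suminf \<delta> - s n) \<longlonglongrightarrow> 0"
    using tendsto_diff[OF tendsto_const[of "suminf \<delta>"] summable_LIMSEQ[OF sd]] by (simp add: s_def)
  have nle: "\<forall>\<^sub>F n in sequentially. \<forall>x\<in>ball 0 (R/2). \<forall>h. norm (?D n x h - g' x h) \<le> e * norm h"
    if "e > 0" for e
  proof -
    have "\<forall>\<^sub>F n in sequentially. suminf \<delta> - s n < e/2"
      using Ts that by (intro order_tendstoD) auto
    then show ?thesis
    proof (rule eventually_mono, intro ballI allI)
      fix n x h assume n: "suminf \<delta> - s n < e / 2" and x: "x \<in> ball (0::complex\<times>complex) (R / 2)"
      have "norm (?D n x h - g' x h) = norm (g' x h - ?D n x h)" by (simp add: norm_minus_commute)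
      also have "\<dots> \<le> 2 * norm h * (suminf \<delta> - s n)" using L6' x by simp
      also have "\<dots> \<le> 2 * norm h * (e/2)" using n norm_ge_zero[of h]
        by (intro mult_left_mono) auto
      also have "\<dots> = e * norm h" by simp
      finally show "norm (?D n x h - g' x h) \<le> e * norm h" .
    qed
  qed
  have A: "\<And>n x. x \<in> ball 0 (R/2) \<Longrightarrow> (comp_seq P n has_derivative ?D n x) (at x within ball 0 (R/2))"
    using L3 by (simp add: has_derivative_at_withinI)
  have lim0: "(\<lambda>n. comp_seq P n 0) \<longlonglongrightarrow> 0" by (simp add: V0)
  have z: "(0::complex\<times>complex) \<in> ball 0 (R/2)" using R by simp
  have "\<exists>g. \<forall>x\<in>ball 0 (R/2). (\<lambda>n. comp_seq P n x) \<longlonglongrightarrow> g x \<and> (g has_derivative g' x) (at x within ball 0 (R/2))"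
    by (rule has_derivative_sequence[OF convex_ball A nle z lim0])
  then obtain g where g: "\<And>x. x \<in> ball 0 (R/2) \<Longrightarrow> (\<lambda>n. comp_seq P n x) \<longlonglongrightarrow> g x \<and> (g has_derivative g' x) (at x within ball 0 (R/2))"
    by blast
  have nb: "norm x < R/2" if "x \<in> ball 0 (R/2)" for x :: "complex\<times>complex" using that by simp
  have gl: "(\<lambda>n. comp_seq P n x) \<longlonglongrightarrow> g x" if "x \<in> ball 0 (R/2)" for x using g[OF that] by blast
  have gd: "(g has_derivative g' x) (at x)" if "x \<in> ball 0 (R/2)" for x
  proof -
    have "(g has_derivative g' x) (at x within ball 0 (R/2))" using g[OF that] by blast
    then show ?thesis using at_within_open[OF that open_ball] by simp
  qed
  have gcl: "clin (g' x)" if "x \<in> ball 0 (R/2)" for x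
  proof -
    have nx: "norm x < R/2" using nb[OF that] .
    have c1: "\<And>h. (\<lambda>n. ?D n x h) \<longlonglongrightarrow> g' x h" using L6[OF nx] .
    have c2: "\<And>n. clin (?D n x)" using L4[OF nx] by blast
    show ?thesis by (rule clin_lim[OF c1 c2])
  qed
  have g'b: "norm (g' x h - h) \<le> 1/2 * norm h" if "x \<in> ball 0 (R/2)" for x h
  proof -
    have nx: "norm x < R/2" using nb[OF that] .
    have "(\<lambda>n. norm (?D n x h - h)) \<longlonglongrightarrow> norm (g' x h - h)"
      by (rule tendsto_norm[OF tendsto_diff[OF L6[OF nx] tendsto_const]])
    then show ?thesis
    proof (rule LIMSEQ_le_const2, intro exI allI impI)
      fix n
      have "norm (?D n x h - h) \<le> 2 * s n * norm h" using L4[OF nx] by blast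
      also have "\<dots> \<le> 1/2 * norm h" using s_le[of n] norm_ge_zero[of h]
        by (intro mult_right_mono) auto
      finally show "norm (?D n x h - h) \<le> 1/2 * norm h" .
    qed
  qed
  have L2b: "norm (comp_seq P n x) \<le> 3/2 * norm x" if "x \<in> ball 0 (R/2)" for x n
    using L2' nb[OF that] by simp
  have glip: "norm ((g x - x) - (g y - y)) \<le> 1/2 * norm (x - y)"
    if "x \<in> ball 0 (R/2)" "y \<in> ball 0 (R/2)" for x y
  proof (rule differentiable_bound[where f="\<lambda>w. g w - w" and f'="\<lambda>w h. g' w h - h" and S="ball 0 (R/2)"])
    show "((\<lambda>w. g w - w) has_derivative (\<lambda>h. g' x h - h)) (at x within ball 0 (R/2))"
      if "x \<in> ball 0 (R/2)" for x
      using has_derivative_at_withinI[OF gd[OF that]] by (rule has_derivative_diff[OF _ has_derivative_ident])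
    show "onorm (\<lambda>h. g' x h - h) \<le> 1/2" if "x \<in> ball 0 (R/2)" for x
      using g'b[OF that] by (intro onorm_le) blast
  qed (simp_all only: that convex_ball)
  have g0: "g 0 = 0"
  proof -
    have "(0::complex\<times>complex) \<in> ball 0 (R/2)" using R by simp
    from gl[OF this] show ?thesis by (simp add: V0 LIMSEQ_const_iff)
  qed
  have gcont: "continuous_on (ball 0 (R/2)) g"
  proof (rule continuous_at_imp_continuous_on, rule ballI)
    fix x assume "x \<in> ball (0::complex\<times>complex) (R/2)"
    then show "isCont g x" using has_derivative_continuous[OF gd] by blast
  qed
  have gsurj: "\<exists>x\<in>ball 0 (R/2). g x = y" if y: "norm y < R/8" for y
  proof -
    have sub: "cball 0 (R/4) \<subseteq> ball (0::complex\<times>complex) (R/2)" using R by auto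
    have gc: "continuous_on (cball 0 (R/4)) g" by (rule continuous_on_subset[OF gcont sub])
    have cont: "continuous_on (cball 0 (R/4)) (\<lambda>x. y - (g x - x))"
      using gc by (intro continuous_intros)
    have maps: "(\<lambda>x. y - (g x - x)) \<in> cball 0 (R/4) \<rightarrow> cball 0 (R/4)"
    proof
      fix x :: "complex\<times>complex" assume x: "x \<in> cball 0 (R/4)"
      then have xb: "x \<in> ball 0 (R/2)" using sub by auto
      have zb: "(0::complex\<times>complex) \<in> ball 0 (R/2)" using R by simp
      have nx: "norm x \<le> R/4" using x by simp
      have "norm (g x - x) \<le> 1/2 * norm x" using glip[OF xb zb] g0 by simp
      then have "norm (y - (g x - x)) \<le> R/8 + 1/2 * (R/4)"
        using norm_triangle_ineq4[of y "g x - x"] y nx by linarith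
      then show "y - (g x - x) \<in> cball 0 (R/4)" by simp
    qed
    have e4: "R/4 > 0" using R by simp
    obtain x where "x \<in> cball 0 (R/4)" "y - (g x - x) = x"
      using brouwer_ball[OF e4 cont maps] by blast
    then show ?thesis using sub by (intro bexI[of _ x]) (auto simp: algebra_simps)
  qed
  show ?thesis by (rule that[OF gl gd gcl g'b L2b glip gsurj])
qed



locale bsetup =
  fixes k :: nat and \<alpha> \<beta> :: complex
    and F G :: "complex \<times> complex \<Rightarrow> complex \<times> complex"
    and fs :: "nat \<Rightarrow> (complex \<times> complex \<Rightarrow> complex \<times> complex)"
  assumes k2: "k \<ge> 2"
    and A1: "cmod \<alpha> ^ k < cmod \<beta>" and A2: "cmod \<beta> \<le> cmod \<alpha> ^ (k - 1)"
    and Fdef: "\<And>z1 z2. F (z1, z2) = (\<alpha> * z1 + z2 ^ 2, \<beta> * z2)"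
    and Gdef: "\<And>z1 z2. G (z1, z2) = (\<beta> * z1, \<alpha> * z2 + z1 ^ k)"
    and fsFG: "\<And>n. n \<ge> 1 \<Longrightarrow> fs n = F \<or> fs n = G"
begin

abbreviation "p \<equiv> cmod \<alpha>"
abbreviation "q \<equiv> cmod \<beta>"

lemma q_pos: "q > 0"
  using A1 by (smt (verit) norm_ge_zero zero_le_power)

lemma p_pos: "p > 0"
proof (rule ccontr)
  assume "\<not> p > 0"
  then have "p = 0" by simp
  moreover have "k - 1 \<noteq> 0" using k2 by simp
  then obtain j where j: "k - 1 = Suc j" using not0_implies_Suc by blast
  have "p ^ (k - 1) = 0" unfolding j using \<open>p = 0\<close> by simp
  then have "q \<le> 0" using A2 by linarith
  then show False using q_pos by simp
qed

lemma p_lt1: "p < 1"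
proof (rule ccontr)
  assume "\<not> p < 1"
  then have p1: "p \<ge> 1" by simp
  have "p ^ k = p * p ^ (k - 1)" using k2 by (metis Suc_diff_1 not_numeral_le_zero not_gr0 le_0_eq power_Suc)
  also have "\<dots> \<ge> p ^ (k - 1)" using p1 by (simp add: mult_le_cancel_right1)
  finally have "p ^ (k - 1) \<le> p ^ k" .
  then show False using A1 A2 by simp
qed

lemma q_le_p: "q \<le> p"
proof -
  have "p ^ (k - 1) \<le> p ^ 1"
    using k2 p_pos p_lt1 by (intro power_decreasing) auto
  then show ?thesis using A2 by simp
qed

lemma q_lt1: "q < 1" using q_le_p p_lt1 by simp

lemma q2_lt_p: "q ^ 2 < p"
proof -
  have "q ^ 2 \<le> p ^ 2" using q_le_p q_pos by (intro power_mono) auto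
  also have "p ^ 2 < p" using p_pos p_lt1 by (simp add: power2_eq_square)
  finally show ?thesis .
qed

lemma alpha_nz: "\<alpha> \<noteq> 0" using p_pos by auto
lemma beta_nz: "\<beta> \<noteq> 0" using q_pos by auto

definition "lam = 1 / (p - q ^ 2)"
definition "rG = max q (p ^ 2)"
definition "\<theta> = max (p ^ k / q) (rG ^ (k + 1) / (q * p))"

lemma lam_pos: "lam > 0" using q2_lt_p by (simp add: lam_def)
lemma lam_eq: "1 + lam * q ^ 2 = lam * p"
  using q2_lt_p by (simp add: lam_def field_simps)

lemma rG_ge: "q \<le> rG" "p ^ 2 \<le> rG" by (auto simp: rG_def)
lemma rG_le_p: "rG \<le> p"
  using q_le_p p_pos p_lt1 by (auto simp: rG_def power2_eq_square mult_le_cancel_left1)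
lemma rG_pos: "rG > 0" using q_pos rG_ge by linarith

lemma theta_pos: "\<theta> > 0"
  using p_pos q_pos by (simp add: \<theta>_def less_max_iff_disj)

lemma theta_lt1: "\<theta> < 1"
proof -
  have t1: "p ^ k / q < 1" using A1 q_pos by simp
  have "rG ^ (k + 1) < q * p"
  proof (cases "rG = q")
    case True
    have "q ^ k \<le> q ^ 2" using k2 q_pos q_lt1 by (intro power_decreasing) auto
    then have "q ^ k < p" using q2_lt_p by simp
    then have "q * q ^ k < q * p" using q_pos by simp
    then show ?thesis using True by simp
  next
    case False
    then have r: "rG = p ^ 2" by (simp add: rG_def max_def split: if_splits)
    have "p ^ (2 * k + 1) \<le> p ^ k" using p_pos p_lt1 by (intro power_decreasing) auto
    then have "p ^ (2 * k + 1) < q" using A1 by simp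
    then have "p * p ^ (2 * k + 1) < p * q" using p_pos by simp
    moreover have "rG ^ (k + 1) = p * p ^ (2 * k + 1)"
      unfolding r by (simp add: power_mult[symmetric] power_add[symmetric] algebra_simps)
    ultimately show ?thesis by (simp add: mult.commute)
  qed
  then have t2: "rG ^ (k + 1) / (q * p) < 1" using p_pos q_pos by simp
  show ?thesis using t1 t2 by (simp add: \<theta>_def)
qed

type_synonym params = "complex \<times> complex \<times> complex"

definition stepF :: "params \<Rightarrow> params" where
  "stepF X = (case X of (a, b, c) \<Rightarrow> (\<alpha> * a, \<beta> * b, \<alpha> * c + b ^ 2))"
definition stepG :: "params \<Rightarrow> params" where
  "stepG X = (case X of (a, b, c) \<Rightarrow> (\<beta> * a, \<alpha> * b, \<beta> * c))"

fun par :: "nat \<Rightarrow> nat \<Rightarrow> params" where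
  "par m 0 = (1, 1, 0)"
| "par m (Suc n) = (if fs (m + Suc n) = F then stepF (par m n) else stepG (par m n))"

definition Yv :: "params \<Rightarrow> real" where
  "Yv X = (case X of (a, b, c) \<Rightarrow> cmod c + lam * (cmod b) ^ 2)"
definition Wt :: "params \<Rightarrow> real" where
  "Wt X = (case X of (a, b, c) \<Rightarrow> (1 + Yv X / cmod a) * (cmod a + Yv X) ^ k / cmod b)"
definition Mt :: "params \<Rightarrow> real" where
  "Mt X = (case X of (a, b, c) \<Rightarrow> cmod a + cmod b + Yv X)"

lemma par_nz: "fst (par m n) \<noteq> 0 \<and> fst (snd (par m n)) \<noteq> 0"
  by (induction n) (auto simp: stepF_def stepG_def alpha_nz beta_nz split: prod.splits)

lemma Yv_nonneg: "Yv X \<ge> 0" using lam_pos by (auto simp: Yv_def split: prod.splits)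

lemma Wgen:
  fixes A B Y A' B' Y' u v r :: real
  assumes "A > 0" "B > 0" "Y \<ge> 0" "Y' \<ge> 0" "u > 0" "v > 0" "u \<le> r"
    "A' = u * A" "B' = v * B" "Y' \<le> r * Y"
  shows "(1 + Y' / A') * (A' + Y') ^ k / B' \<le> (r ^ (k + 1) / (u * v)) * ((1 + Y / A) * (A + Y) ^ k / B)"
proof -
  have r0: "r > 0" using assms by linarith
  have e1: "1 + Y' / A' \<le> (r / u) * (1 + Y / A)"
  proof -
    have "Y' / A' = Y' / (u * A)" by (simp add: assms)
    also have "\<dots> \<le> (r * Y) / (u * A)" by (rule divide_right_mono) (use assms in auto)
    also have "\<dots> = (r / u) * (Y / A)" by simp
    finally have "Y' / A' \<le> (r / u) * (Y / A)" .
    moreover have "1 \<le> r / u" using assms by simp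
    ultimately show ?thesis by (simp add: algebra_simps)
  qed
  have e2: "(A' + Y') ^ k \<le> (r * (A + Y)) ^ k"
  proof (rule power_mono)
    have "u * A \<le> r * A" using assms by (intro mult_right_mono) auto
    then have "A' + Y' \<le> r * A + r * Y" using assms(8,10) by linarith
    then show "A' + Y' \<le> r * (A + Y)" by (simp add: distrib_left)
    show "0 \<le> A' + Y'" using assms by simp
  qed
  have "(1 + Y' / A') * (A' + Y') ^ k \<le> ((r / u) * (1 + Y / A)) * (r * (A + Y)) ^ k"
    using e1 e2 assms by (intro mult_mono) auto
  then have "(1 + Y' / A') * (A' + Y') ^ k / (v * B) \<le> ((r / u) * (1 + Y / A)) * (r * (A + Y)) ^ k / (v * B)"
    by (rule divide_right_mono) (use assms in simp)
  then have "(1 + Y' / A') * (A' + Y') ^ k / B' \<le> ((r / u) * (1 + Y / A)) * (r * (A + Y)) ^ k / (v * B)"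
    by (simp add: assms(9))
  also have "\<dots> = (r / u) * (1 + Y / A) * (r ^ k * (A + Y) ^ k) / (v * B)"
    by (simp add: power_mult_distrib)
  also have "\<dots> = (r ^ (k + 1) / (u * v)) * ((1 + Y / A) * (A + Y) ^ k / B)"
  proof -
    have "(r / u) * (1 + Y / A) * (r ^ k * X) / (v * B) = (r ^ (k + 1) / (u * v)) * ((1 + Y / A) * X / B)" for X
      using assms by (simp add: field_simps)
    then show ?thesis .
  qed
  finally show ?thesis .
qed

lemma Wt_stepF:
  assumes "a \<noteq> 0" "b \<noteq> 0"
  shows "Wt (stepF (a, b, c)) \<le> \<theta> * Wt (a, b, c)"
proof -
  have Y': "Yv (stepF (a, b, c)) \<le> p * Yv (a, b, c)"
  proof -
    have "cmod (\<alpha> * c + b ^ 2) \<le> p * cmod c + (cmod b) ^ 2"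
      using norm_triangle_ineq[of "\<alpha> * c" "b ^ 2"] by (simp add: norm_mult norm_power)
    then have "Yv (stepF (a, b, c)) \<le> p * cmod c + (cmod b) ^ 2 + lam * q ^ 2 * (cmod b) ^ 2"
      by (simp add: Yv_def stepF_def norm_mult power_mult_distrib)
    also have "\<dots> = p * cmod c + (1 + lam * q ^ 2) * (cmod b) ^ 2" by (simp add: algebra_simps)
    also have "\<dots> = p * Yv (a, b, c)" by (simp add: lam_eq Yv_def algebra_simps)
    finally show ?thesis .
  qed
  have "Wt (stepF (a, b, c)) \<le> (p ^ (k + 1) / (p * q)) * Wt (a, b, c)"
    unfolding Wt_def
    using Wgen[of "cmod a" "cmod b" "Yv (a, b, c)" "Yv (stepF (a, b, c))" p q p
          "cmod (\<alpha> * a)" "cmod (\<beta> * b)"] assms Y' Yv_nonneg p_pos q_pos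
    by (simp add: stepF_def norm_mult)
  also have "p ^ (k + 1) / (p * q) = p ^ k / q" using p_pos by simp
  also have "p ^ k / q * Wt (a, b, c) \<le> \<theta> * Wt (a, b, c)"
  proof (rule mult_right_mono)
    show "p ^ k / q \<le> \<theta>" by (simp add: \<theta>_def)
    show "0 \<le> Wt (a, b, c)" using Yv_nonneg[of "(a, b, c)"] by (simp add: Wt_def)
  qed
  finally show ?thesis .
qed

lemma Wt_stepG:
  assumes "a \<noteq> 0" "b \<noteq> 0"
  shows "Wt (stepG (a, b, c)) \<le> \<theta> * Wt (a, b, c)"
proof -
  have Y': "Yv (stepG (a, b, c)) \<le> rG * Yv (a, b, c)"
  proof -
    have "Yv (stepG (a, b, c)) = q * cmod c + lam * p ^ 2 * (cmod b) ^ 2"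
      by (simp add: Yv_def stepG_def norm_mult power_mult_distrib)
    also have "\<dots> \<le> rG * cmod c + lam * rG * (cmod b) ^ 2"
      using rG_ge lam_pos by (intro add_mono mult_right_mono mult_left_mono) auto
    also have "\<dots> = rG * Yv (a, b, c)" by (simp add: Yv_def algebra_simps)
    finally show ?thesis .
  qed
  have "Wt (stepG (a, b, c)) \<le> (rG ^ (k + 1) / (q * p)) * Wt (a, b, c)"
    unfolding Wt_def
    using Wgen[of "cmod a" "cmod b" "Yv (a, b, c)" "Yv (stepG (a, b, c))" q p rG
          "cmod (\<beta> * a)" "cmod (\<alpha> * b)"] assms Y' Yv_nonneg p_pos q_pos rG_ge
    by (simp add: stepG_def norm_mult)
  also have "\<dots> \<le> \<theta> * Wt (a, b, c)"
  proof (rule mult_right_mono)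
    show "rG ^ (k + 1) / (q * p) \<le> \<theta>" by (simp add: \<theta>_def)
    show "0 \<le> Wt (a, b, c)" using Yv_nonneg[of "(a, b, c)"] by (simp add: Wt_def)
  qed
  finally show ?thesis .
qed

definition "W0 = (1 + lam) ^ (k + 1)"

lemma Wt_par: "Wt (par m n) \<le> W0 * \<theta> ^ n"
proof (induction n)
  case 0 then show ?case by (simp add: Wt_def Yv_def W0_def)
next
  case (Suc n)
  obtain a b c where X: "par m n = (a, b, c)" by (metis prod_cases3)
  have nz: "a \<noteq> 0" "b \<noteq> 0" using par_nz[of m n] X by auto
  have "Wt (par m (Suc n)) \<le> \<theta> * Wt (par m n)"
    using Wt_stepF[OF nz] Wt_stepG[OF nz] X by simp
  also have "\<dots> \<le> \<theta> * (W0 * \<theta> ^ n)" using Suc theta_pos by simp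
  finally show ?case by (simp add: algebra_simps)
qed

lemma Mt_par: "Mt (par m n) \<le> (2 + lam) * p ^ n"
proof (induction n)
  case 0 then show ?case by (simp add: Mt_def Yv_def)
next
  case (Suc n)
  obtain a b c where X: "par m n = (a, b, c)" by (metis prod_cases3)
  have "Mt (stepF (a, b, c)) \<le> p * Mt (a, b, c)"
  proof -
    have "cmod (\<alpha> * c + b ^ 2) \<le> p * cmod c + (cmod b) ^ 2"
      using norm_triangle_ineq[of "\<alpha> * c" "b ^ 2"] by (simp add: norm_mult norm_power)
    moreover have "q * cmod b \<le> p * cmod b" using q_le_p by (simp add: mult_right_mono)
    moreover have "(cmod b)^2 + lam * (q^2 * (cmod b)^2) = p * (lam * (cmod b)^2)"
      using arg_cong[OF lam_eq, of "\<lambda>t. t * (cmod b)^2"] by (simp add: algebra_simps)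
    ultimately show ?thesis
      by (simp add: Mt_def Yv_def stepF_def norm_mult power_mult_distrib algebra_simps)
  qed
  moreover have "Mt (stepG (a, b, c)) \<le> p * Mt (a, b, c)"
  proof -
    have "q * cmod a \<le> p * cmod a" "q * cmod c \<le> p * cmod c" using q_le_p by (simp_all add: mult_right_mono)
    moreover have "lam * p ^ 2 * (cmod b) ^ 2 \<le> lam * p * (cmod b) ^ 2"
      using lam_pos p_pos p_lt1 by (intro mult_right_mono mult_left_mono) (auto simp: power2_eq_square)
    ultimately show ?thesis
      by (simp add: Mt_def Yv_def stepG_def norm_mult power_mult_distrib algebra_simps)
  qed
  ultimately have "Mt (par m (Suc n)) \<le> p * Mt (par m n)" using X by simp
  also have "\<dots> \<le> p * ((2 + lam) * p ^ n)" using Suc p_pos by simp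
  finally show ?case by (simp add: algebra_simps)
qed

end


context bsetup begin

definition yP :: "complex \<Rightarrow> complex \<Rightarrow> complex \<times> complex \<Rightarrow> complex" where
  "yP a c w = a * fst w + c * (snd w) ^ 2"
definition eP :: "complex \<Rightarrow> complex \<Rightarrow> complex \<Rightarrow> complex \<times> complex \<Rightarrow> complex" where
  "eP a b c w = (yP a c w) ^ k / (\<alpha> * b)"
definition deP :: "complex \<Rightarrow> complex \<Rightarrow> complex \<Rightarrow> complex \<times> complex \<Rightarrow> complex \<times> complex \<Rightarrow> complex" where
  "deP a b c w h = of_nat k * (yP a c w) ^ (k - 1) * (a * fst h + 2 * c * snd w * snd h) / (\<alpha> * b)"
definition Pg :: "complex \<Rightarrow> complex \<Rightarrow> complex \<Rightarrow> complex \<times> complex \<Rightarrow> complex \<times> complex" where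
  "Pg a b c w = (fst w - c / a * (2 * snd w * eP a b c w + (eP a b c w) ^ 2), snd w + eP a b c w)"
definition DPg :: "complex \<Rightarrow> complex \<Rightarrow> complex \<Rightarrow> complex \<times> complex \<Rightarrow> complex \<times> complex \<Rightarrow> complex \<times> complex" where
  "DPg a b c w h = (fst h - c / a * (2 * snd h * eP a b c w + 2 * snd w * deP a b c w h + 2 * eP a b c w * deP a b c w h),
                    snd h + deP a b c w h)"

lemma yP_deriv: "(yP a c has_derivative (\<lambda>h. a * fst h + 2 * c * snd w * snd h)) (at w)"
  unfolding yP_def
  by (auto intro!: derivative_eq_intros simp: algebra_simps)

lemma eP_deriv: assumes "b \<noteq> 0" shows "(eP a b c has_derivative deP a b c w) (at w)"
proof -
  have "((\<lambda>w. (yP a c w) ^ k / (\<alpha> * b)) has_derivative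
      (\<lambda>h. of_nat k * (yP a c w) ^ (k - 1) * (a * fst h + 2 * c * snd w * snd h) / (\<alpha> * b))) (at w)"
    using assms alpha_nz by (auto intro!: derivative_eq_intros yP_deriv simp: fun_eq_iff field_simps)
  then show ?thesis unfolding eP_def[abs_def] deP_def[abs_def] .
qed

lemma Pg_deriv: assumes "a \<noteq> 0" "b \<noteq> 0" shows "(Pg a b c has_derivative DPg a b c w) (at w)"
  unfolding Pg_def[abs_def] DPg_def[abs_def]
  using assms by (auto intro!: derivative_eq_intros eP_deriv simp: fun_eq_iff field_simps)

lemma DPg_clin: "clin (DPg a b c w)"
  unfolding clin_def
proof (intro allI)
  fix s :: complex and h :: "complex \<times> complex"
  show "DPg a b c w (cscale2 s h) = cscale2 s (DPg a b c w h)"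
    by (simp add: DPg_def deP_def cscale2_def algebra_simps)
qed

lemma DPg_bound:
  assumes a: "a \<noteq> 0" and b: "b \<noteq> 0" and w: "norm w \<le> R" and R1: "R \<le> 1" and R0: "0 \<le> R"
    and small: "Wt (a, b, c) * R ^ (k - 1) / p \<le> 1"
  shows "norm (DPg a b c w h - h) \<le> ((2 + 8 * real k) / p) * R ^ (k - 1) * Wt (a, b, c) * norm h"
proof -
  define A where "A = cmod a"
  define B where "B = cmod b"
  define C where "C = cmod c"
  define Y where "Y = C + lam * B ^ 2"
  have A0: "A > 0" using a by (simp add: A_def)
  have B0: "B > 0" using b by (simp add: B_def)
  have C0: "C \<ge> 0" by (simp add: C_def)
  have CY: "C \<le> Y" using lam_pos by (simp add: Y_def)
  have Y0: "Y \<ge> 0" using C0 CY by simp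
  have Wt_eq: "Wt (a, b, c) = (1 + Y / A) * ((A + Y) ^ k / B)"
    by (simp add: Wt_def Yv_def A_def B_def C_def Y_def)
  define X where "X = (A + Y) ^ k / B"
  define \<eta> where "\<eta> = X * R ^ (k - 1) / p"
  have X0: "X \<ge> 0" using A0 B0 Y0 by (simp add: X_def)
  have XW: "X \<le> Wt (a, b, c)"
  proof -
    have "1 * X \<le> (1 + Y / A) * X" using A0 Y0 X0 by (intro mult_right_mono) auto
    then show ?thesis by (simp add: Wt_eq X_def)
  qed
  have Rk0: "0 \<le> R ^ (k - 1) / p" using R0 p_pos by simp
  have \<eta>1: "\<eta> \<le> 1"
  proof -
    have "X * (R ^ (k - 1) / p) \<le> Wt (a, b, c) * (R ^ (k - 1) / p)" using XW Rk0 by (rule mult_right_mono)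
    then show ?thesis using small by (simp add: \<eta>_def)
  qed
  have \<eta>0: "\<eta> \<ge> 0" using mult_nonneg_nonneg[OF X0 Rk0] by (simp add: \<eta>_def)
  have w1: "cmod (fst w) \<le> R" using w norm_fst_le[of "fst w" "snd w"] by simp
  have w2: "cmod (snd w) \<le> R" using w norm_snd_le[of "snd w" "fst w"] by simp
  have h1: "cmod (fst h) \<le> norm h" using norm_fst_le[of "fst h" "snd h"] by simp
  have h2: "cmod (snd h) \<le> norm h" using norm_snd_le[of "snd h" "fst h"] by simp
  have Rk: "R ^ k \<le> R ^ (k - 1)" using R0 R1 by (intro power_decreasing) auto
  have y1: "cmod (yP a c w) \<le> (A + Y) * R"
  proof -
    have "cmod (yP a c w) \<le> A * cmod (fst w) + C * cmod (snd w) ^ 2"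
      unfolding yP_def A_def C_def using norm_triangle_ineq[of "a * fst w" "c * (snd w)^2"]
      by (simp add: norm_mult norm_power)
    also have "\<dots> \<le> A * R + C * R"
    proof (intro add_mono mult_left_mono)
      show "cmod (fst w) \<le> R" by (rule w1)
      have "cmod (snd w) ^ 2 \<le> R ^ 2" using w2 by (intro power_mono) auto
      also have "R ^ 2 \<le> R" using mult_left_mono[OF R1 R0] by (simp add: power2_eq_square)
      finally show "cmod (snd w) ^ 2 \<le> R" .
    qed (use A0 C0 in auto)
    also have "\<dots> \<le> (A + Y) * R" using mult_right_mono[OF CY R0] by (simp add: algebra_simps)
    finally show ?thesis .
  qed
  have y0: "0 \<le> (A + Y) * R" using A0 Y0 R0 by simp
  have e1: "cmod (eP a b c w) \<le> \<eta>"
  proof -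
    have "cmod (eP a b c w) = cmod (yP a c w) ^ k / (p * B)"
      by (simp add: eP_def norm_divide norm_mult norm_power B_def)
    also have "\<dots> \<le> ((A + Y) * R) ^ k / (p * B)"
      using y1 p_pos B0 by (intro divide_right_mono power_mono) auto
    also have "\<dots> = (A + Y) ^ k * R ^ k / (p * B)" by (simp add: power_mult_distrib)
    also have "\<dots> \<le> (A + Y) ^ k * R ^ (k - 1) / (p * B)"
      using Rk p_pos B0 A0 Y0 by (intro divide_right_mono mult_left_mono) auto
    also have "\<dots> = \<eta>" by (simp add: \<eta>_def X_def)
    finally show ?thesis .
  qed
  have l1: "cmod (a * fst h + 2 * c * snd w * snd h) \<le> 2 * (A + Y) * norm h"
  proof -
    have "cmod (a * fst h + 2 * c * snd w * snd h) \<le> A * cmod (fst h) + 2 * C * cmod (snd w) * cmod (snd h)"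
      unfolding A_def C_def using norm_triangle_ineq[of "a * fst h" "2 * c * snd w * snd h"]
      by (simp add: norm_mult)
    also have "\<dots> \<le> A * norm h + 2 * Y * 1 * norm h"
    proof (intro add_mono mult_left_mono mult_mono h1 h2)
      show "C \<le> Y" by (rule CY)
      show "cmod (snd w) \<le> 1" using w2 R1 by simp
    qed (use A0 C0 Y0 in auto)
    also have "\<dots> \<le> 2 * (A + Y) * norm h" using A0 by (simp add: algebra_simps mult_right_mono)
    finally show ?thesis .
  qed
  have kk: "(A + Y) ^ (k - 1) * (A + Y) = (A + Y) ^ k"
    using k2 by (metis Suc_diff_1 not_numeral_le_zero not_gr0 le_0_eq power_Suc2)
  have de1: "cmod (deP a b c w h) \<le> 2 * real k * \<eta> * norm h"
  proof -
    have "cmod (deP a b c w h) = real k * cmod (yP a c w) ^ (k - 1) * cmod (a * fst h + 2 * c * snd w * snd h) / (p * B)"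
      by (simp add: deP_def norm_divide norm_mult norm_power B_def)
    also have "\<dots> \<le> real k * ((A + Y) * R) ^ (k - 1) * (2 * (A + Y) * norm h) / (p * B)"
      using y1 l1 p_pos B0 y0 by (intro divide_right_mono mult_mono mult_left_mono power_mono) auto
    also have "\<dots> = 2 * real k * (((A + Y) ^ (k - 1) * (A + Y)) * R ^ (k - 1) / (p * B)) * norm h"
      by (simp add: power_mult_distrib)
    also have "\<dots> = 2 * real k * \<eta> * norm h" unfolding kk by (simp add: \<eta>_def X_def)
    finally show ?thesis .
  qed
  define S where "S = 2 * snd h * eP a b c w + 2 * snd w * deP a b c w h + 2 * eP a b c w * deP a b c w h"
  have S1: "cmod S \<le> (2 + 8 * real k) * \<eta> * norm h"
  proof -
    have "cmod S \<le> 2 * cmod (snd h) * cmod (eP a b c w) + 2 * cmod (snd w) * cmod (deP a b c w h)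
          + 2 * cmod (eP a b c w) * cmod (deP a b c w h)"
      unfolding S_def using norm_triangle_ineq[of "2 * snd h * eP a b c w + 2 * snd w * deP a b c w h" "2 * eP a b c w * deP a b c w h"]
        norm_triangle_ineq[of "2 * snd h * eP a b c w" "2 * snd w * deP a b c w h"]
      by (simp add: norm_mult)
    also have "\<dots> \<le> 2 * norm h * \<eta> + 2 * 1 * (2 * real k * \<eta> * norm h) + 2 * 1 * (2 * real k * \<eta> * norm h)"
    proof (intro add_mono mult_left_mono mult_mono h2 e1 de1)
      show "cmod (snd w) \<le> 1" using w2 R1 by simp
      show "cmod (eP a b c w) \<le> 1" using e1 \<eta>1 by simp
    qed (use \<eta>0 in auto)
    also have "\<dots> = (2 + 8 * real k) * \<eta> * norm h" by (simp add: algebra_simps)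
    finally show ?thesis .
  qed
  have "DPg a b c w h - h = (- (c / a * S), deP a b c w h)"
    by (cases h) (simp add: DPg_def S_def)
  then have "norm (DPg a b c w h - h) = norm (- (c / a * S), deP a b c w h)" by simp
  also have "\<dots> \<le> cmod (c / a * S) + cmod (deP a b c w h)"
    using norm_Pair_le[of "- (c / a * S)" "deP a b c w h"] by (simp only: norm_minus_cancel)
  also have "\<dots> \<le> (C / A) * ((2 + 8 * real k) * \<eta> * norm h) + 1 * ((2 + 8 * real k) * \<eta> * norm h)"
  proof (intro add_mono)
    show "cmod (c / a * S) \<le> C / A * ((2 + 8 * real k) * \<eta> * norm h)"
    proof -
      have "cmod (c / a * S) = (C / A) * cmod S" by (simp add: norm_mult norm_divide A_def C_def)
      also have "\<dots> \<le> (C / A) * ((2 + 8 * real k) * \<eta> * norm h)"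
        using S1 A0 C0 by (intro mult_left_mono) auto
      finally show ?thesis .
    qed
    have "2 * real k * \<eta> * norm h \<le> (2 + 8 * real k) * \<eta> * norm h"
      using \<eta>0 by (intro mult_right_mono) auto
    then show "cmod (deP a b c w h) \<le> 1 * ((2 + 8 * real k) * \<eta> * norm h)" using de1 by simp
  qed
  also have "\<dots> \<le> (1 + Y / A) * ((2 + 8 * real k) * \<eta> * norm h)"
  proof -
    have "C / A \<le> Y / A" using CY A0 by (simp add: divide_right_mono)
    then have "C / A + 1 \<le> 1 + Y / A" by simp
    moreover have "0 \<le> (2 + 8 * real k) * \<eta> * norm h" using \<eta>0 by simp
    ultimately show ?thesis by (metis distrib_right mult_right_mono)
  qed
  also have "\<dots> = ((2 + 8 * real k) / p) * R ^ (k - 1) * Wt (a, b, c) * norm h"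
    by (simp add: Wt_eq \<eta>_def X_def mult.commute mult.left_commute)
  finally show ?thesis .
qed

end


context bsetup begin

definition Nmap :: "params \<Rightarrow> complex \<times> complex \<Rightarrow> complex \<times> complex" where
  "Nmap X w = (case X of (a, b, c) \<Rightarrow> (a * fst w + c * (snd w) ^ 2, b * snd w))"
definition Ninv :: "params \<Rightarrow> complex \<times> complex \<Rightarrow> complex \<times> complex" where
  "Ninv X w = (case X of (a, b, c) \<Rightarrow> ((fst w - c / b ^ 2 * (snd w) ^ 2) / a, snd w / b))"

lemma NinvN: "a \<noteq> 0 \<Longrightarrow> b \<noteq> 0 \<Longrightarrow> Ninv (a, b, c) (Nmap (a, b, c) w) = w"
  by (cases w) (simp add: Ninv_def Nmap_def field_simps power_mult_distrib)

lemma NNinv: "a \<noteq> 0 \<Longrightarrow> b \<noteq> 0 \<Longrightarrow> Nmap (a, b, c) (Ninv (a, b, c) w) = w"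
  by (cases w) (simp add: Ninv_def Nmap_def field_simps power_mult_distrib power2_eq_square)

lemma par_NinvN: "Ninv (par m n) (Nmap (par m n) w) = w"
  using par_nz[of m n] NinvN by (metis prod.collapse)
lemma par_NNinv: "Nmap (par m n) (Ninv (par m n) w) = w"
  using par_nz[of m n] NNinv by (metis prod.collapse)

lemma F_eq: "F = (\<lambda>z. (\<alpha> * fst z + (snd z) ^ 2, \<beta> * snd z))"
  by (rule ext, metis Fdef prod.collapse)
lemma G_eq: "G = (\<lambda>z. (\<beta> * fst z, \<alpha> * snd z + (fst z) ^ k))"
  by (rule ext, metis Gdef prod.collapse)

lemma Nmap_stepF: "Nmap (stepF X) w = F (Nmap X w)"
  by (cases X) (simp add: Nmap_def stepF_def F_eq algebra_simps)
lemma Nmap_stepG: "Nmap (stepG X) w = (\<lambda>u. (\<beta> * fst u, \<alpha> * snd u)) (Nmap X w)"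
  by (cases X) (simp add: Nmap_def stepG_def algebra_simps)

lemma Ninv_stepG_G:
  assumes "a \<noteq> 0" "b \<noteq> 0"
  shows "Ninv (stepG (a, b, c)) (G (Nmap (a, b, c) w)) = Pg a b c w"
proof -
  define y where "y = yP a c w"
  define e where "e = eP a b c w"
  have e: "y ^ k = e * (\<alpha> * b)" using assms alpha_nz by (simp add: e_def eP_def y_def)
  have GN: "G (Nmap (a, b, c) w) = (\<beta> * y, \<alpha> * (b * snd w) + e * (\<alpha> * b))"
    by (simp add: G_eq Nmap_def y_def yP_def e[symmetric])
  have sq: "(\<alpha> * (b * snd w) + e * (\<alpha> * b)) ^ 2 = (\<alpha> * b) ^ 2 * (snd w + e) ^ 2"
    by (simp add: power2_eq_square algebra_simps)
  show ?thesis
    unfolding GN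
    using assms alpha_nz beta_nz
    by (simp add: Ninv_def stepG_def Pg_def e_def[symmetric] sq y_def yP_def power_mult_distrib
        field_simps power2_eq_square)
qed

lemma fs_G: "fs (Suc n) \<noteq> F \<Longrightarrow> fs (Suc n) = G"
  using fsFG[of "Suc n"] by auto

definition Pm :: "nat \<Rightarrow> nat \<Rightarrow> complex \<times> complex \<Rightarrow> complex \<times> complex" where
  "Pm m n = (case n of 0 \<Rightarrow> id | Suc j \<Rightarrow>
      (if fs (m + Suc j) = F then id else (case par m j of (a, b, c) \<Rightarrow> Pg a b c)))"

lemma key_step: "Ninv (par m (Suc n)) (fs (m + Suc n) x) = Pm m (Suc n) (Ninv (par m n) x)"
proof -
  obtain a b c where X: "par m n = (a, b, c)" by (metis prod_cases3)
  have nz: "a \<noteq> 0" "b \<noteq> 0" using par_nz[of m n] X by auto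
  define w where "w = Ninv (par m n) x"
  have x: "x = Nmap (a, b, c) w" using par_NNinv[of m n x] X by (simp add: w_def)
  show ?thesis
  proof (cases "fs (m + Suc n) = F")
    case True
    have "Ninv (stepF (a, b, c)) (F (Nmap (a, b, c) w)) = w"
    proof -
      obtain a' b' c' where S: "stepF (a, b, c) = (a', b', c')" by (metis prod_cases3)
      have "a' \<noteq> 0" "b' \<noteq> 0" using S nz alpha_nz beta_nz by (auto simp: stepF_def)
      then show ?thesis using NinvN[of a' b' c' w] Nmap_stepF[of "(a, b, c)" w] S by simp
    qed
    then show ?thesis using True X NinvN[OF nz, of c w] by (simp add: Pm_def w_def[symmetric] x)
  next
    case False
    then have G: "fs (m + Suc n) = G" using fs_G[of "m + n"] by simp
    show ?thesis using False G X Ninv_stepG_G[OF nz, of c w] NinvN[OF nz, of c w] by (simp add: Pm_def w_def[symmetric] x)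
  qed
qed

definition sh :: "nat \<Rightarrow> nat \<Rightarrow> complex \<times> complex \<Rightarrow> complex \<times> complex" where
  "sh m j = fs (m + j)"

lemma V_eq: "comp_seq (Pm m) n x = Ninv (par m n) (comp_seq (sh m) n x)"
proof (induction n)
  case 0 then show ?case by (simp add: Ninv_def)
next
  case (Suc n)
  have "comp_seq (Pm m) (Suc n) x = Pm m (Suc n) (comp_seq (Pm m) n x)" by simp
  also have "\<dots> = Pm m (Suc n) (Ninv (par m n) (comp_seq (sh m) n x))" using Suc by simp
  also have "\<dots> = Ninv (par m (Suc n)) (fs (m + Suc n) (comp_seq (sh m) n x))" by (rule key_step[symmetric])
  also have "\<dots> = Ninv (par m (Suc n)) (comp_seq (sh m) (Suc n) x)" by (simp add: sh_def)
  finally show ?case .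
qed

lemma comp_shift: "comp_seq fs (m + n) x = comp_seq (sh m) n (comp_seq fs m x)"
  by (induction n) (auto simp: sh_def)

lemma Nmap_par_comp: "Nmap (par 0 (m + n)) w = Nmap (par m n) (Nmap (par 0 m) w)"
proof (induction n)
  case 0 then show ?case by (cases w) (simp add: Nmap_def)
next
  case (Suc n)
  show ?case
  proof (cases "fs (m + Suc n) = F")
    case True
    then show ?thesis using Suc by (simp add: Nmap_stepF)
  next
    case False
    then show ?thesis using Suc by (simp add: Nmap_stepG)
  qed
qed

lemma Ninv_par_comp: "Ninv (par 0 (m + n)) y = Ninv (par 0 m) (Ninv (par m n) y)"
proof -
  define w where "w = Ninv (par 0 m) (Ninv (par m n) y)"
  have "Nmap (par 0 (m + n)) w = y" unfolding Nmap_par_comp w_def by (simp add: par_NNinv)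
  then have "Ninv (par 0 (m + n)) y = Ninv (par 0 (m + n)) (Nmap (par 0 (m + n)) w)" by simp
  also have "\<dots> = w" by (rule par_NinvN)
  finally show ?thesis by (simp add: w_def)
qed

lemma Nmap_bound:
  assumes "norm v \<le> 1"
  shows "norm (Nmap X v) \<le> Mt X"
proof -
  obtain a b c where X: "X = (a, b, c)" by (metis prod_cases3)
  have v1: "cmod (fst v) \<le> 1" using assms norm_fst_le[of "fst v" "snd v"] by simp
  have v2: "cmod (snd v) \<le> 1" using assms norm_snd_le[of "snd v" "fst v"] by simp
  have v22: "cmod (snd v) ^ 2 \<le> 1" using v2 by (simp add: power_le_one)
  have "norm (Nmap X v) \<le> cmod (a * fst v + c * (snd v) ^ 2) + cmod (b * snd v)"
    using norm_Pair_le by (simp add: Nmap_def X)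
  also have "\<dots> \<le> cmod a * cmod (fst v) + cmod c * cmod (snd v) ^ 2 + cmod b * cmod (snd v)"
    using norm_triangle_ineq[of "a * fst v" "c * (snd v) ^ 2"] by (simp add: norm_mult norm_power)
  also have "\<dots> \<le> cmod a * 1 + cmod c * 1 + cmod b * 1"
    by (intro add_mono mult_left_mono v1 v2 v22) auto
  also have "\<dots> \<le> Mt X" using lam_pos by (simp add: Mt_def Yv_def X)
  finally show ?thesis .
qed

end


context bsetup begin

definition "\<kappa> = (2 + 8 * real k) / p"
definition "Rr = min 1 (min (p / W0) ((1 - \<theta>) / (4 * \<kappa> * W0)))"
definition "\<delta> n = \<kappa> * Rr ^ (k - 1) * W0 * \<theta> ^ n"

lemma W0_ge1: "W0 \<ge> 1"
proof -
  have "1 \<le> 1 + lam" using lam_pos by simp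
  from one_le_power[OF this, of "k + 1"] show ?thesis unfolding W0_def .
qed
lemma kappa_pos: "\<kappa> > 0" using p_pos by (simp add: \<kappa>_def)

lemma Rr_pos: "Rr > 0"
  using p_pos W0_ge1 theta_lt1 kappa_pos by (simp add: Rr_def)
lemma Rr_le1: "Rr \<le> 1" by (simp add: Rr_def)
lemma Rrk: "Rr ^ (k - 1) \<le> Rr"
proof -
  have "Rr ^ (k - 1) \<le> Rr ^ 1" using Rr_pos Rr_le1 k2 by (intro power_decreasing) auto
  then show ?thesis by simp
qed
lemma Rrk0: "Rr ^ (k - 1) \<ge> 0" using Rr_pos by simp

lemma cond1: "W0 * Rr ^ (k - 1) \<le> p"
proof -
  have "W0 * Rr ^ (k - 1) \<le> W0 * Rr" using Rrk W0_ge1 by simp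
  also have "\<dots> \<le> W0 * (p / W0)" using W0_ge1 by (intro mult_left_mono) (auto simp: Rr_def)
  also have "\<dots> = p" using W0_ge1 by simp
  finally show ?thesis .
qed

lemma cond2: "\<kappa> * Rr ^ (k - 1) * W0 / (1 - \<theta>) \<le> 1/4"
proof -
  have t: "1 - \<theta> > 0" using theta_lt1 by simp
  have "\<kappa> * Rr ^ (k - 1) * W0 \<le> \<kappa> * Rr * W0" using Rrk kappa_pos W0_ge1 by simp
  also have "\<dots> \<le> \<kappa> * ((1 - \<theta>) / (4 * \<kappa> * W0)) * W0"
    using kappa_pos W0_ge1 by (intro mult_right_mono mult_left_mono) (auto simp: Rr_def)
  also have "\<dots> = (1 - \<theta>) / 4" using kappa_pos W0_ge1 by (simp add: field_simps)
  finally show ?thesis using t by (simp add: field_simps)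
qed

lemma delta_nonneg: "\<delta> n \<ge> 0"
  using kappa_pos Rrk0 W0_ge1 theta_pos by (simp add: \<delta>_def)

lemma delta_sums: "\<delta> sums (\<kappa> * Rr ^ (k - 1) * W0 / (1 - \<theta>))"
proof -
  have "(\<lambda>n. \<theta> ^ n) sums (1 / (1 - \<theta>))" using theta_pos theta_lt1 by (intro geometric_sums) auto
  then have "(\<lambda>n. (\<kappa> * Rr ^ (k - 1) * W0) * \<theta> ^ n) sums ((\<kappa> * Rr ^ (k - 1) * W0) * (1 / (1 - \<theta>)))"
    by (rule sums_mult)
  then show ?thesis by (simp add: \<delta>_def[abs_def])
qed

lemma delta_summable: "summable \<delta>" using delta_sums by (rule sums_summable)
lemma delta_sum: "suminf \<delta> \<le> 1/4" using delta_sums cond2 sums_unique by metis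

definition DPm :: "nat \<Rightarrow> nat \<Rightarrow> complex \<times> complex \<Rightarrow> complex \<times> complex \<Rightarrow> complex \<times> complex" where
  "DPm m j w = (if fs (m + Suc j) = F then id else (case par m j of (a, b, c) \<Rightarrow> DPg a b c w))"

lemma Pm0: "Pm m (Suc n) 0 = 0"
proof -
  have k0: "k \<noteq> 0" using k2 by simp
  obtain a b c where X: "par m n = (a, b, c)" by (metis prod_cases3)
  have z: "(0::complex) ^ k = 0" using k0 by simp
  have "Pg a b c 0 = 0" by (simp add: Pg_def eP_def yP_def z zero_prod_def)
  then show ?thesis by (simp add: Pm_def X)
qed

lemma Pm_deriv: "(Pm m (Suc n) has_derivative DPm m n w) (at w)"
proof -
  obtain a b c where X: "par m n = (a, b, c)" by (metis prod_cases3)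
  have nz: "a \<noteq> 0" "b \<noteq> 0" using par_nz[of m n] X by auto
  show ?thesis
  proof (cases "fs (m + Suc n) = F")
    case True
    then show ?thesis by (simp add: Pm_def DPm_def X has_derivative_ident id_def)
  next
    case False
    then show ?thesis using Pg_deriv[OF nz, of c w] by (simp add: Pm_def DPm_def X)
  qed
qed

lemma DPm_clin: "clin (DPm m n w)"
  using clin_id DPg_clin by (cases "par m n") (simp add: DPm_def)

lemma Pm_deriv': "norm w \<le> Rr \<Longrightarrow> (Pm m (Suc n) has_derivative DPm m n w) (at w)"
  by (rule Pm_deriv)

lemma DPm_clin': "norm w \<le> Rr \<Longrightarrow> clin (DPm m n w)"
  by (rule DPm_clin)

lemma DPm_bound:
  assumes "norm w \<le> Rr"
  shows "norm (DPm m n w h - h) \<le> \<delta> n * norm h"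
proof -
  obtain a b c where X: "par m n = (a, b, c)" by (metis prod_cases3)
  have nz: "a \<noteq> 0" "b \<noteq> 0" using par_nz[of m n] X by auto
  show ?thesis
  proof (cases "fs (m + Suc n) = F")
    case True
    then show ?thesis using delta_nonneg[of n] by (simp add: DPm_def)
  next
    case False
    have Wt: "Wt (a, b, c) \<le> W0 * \<theta> ^ n" using Wt_par[of m n] X by simp
    have Wt0: "Wt (a, b, c) \<ge> 0" using Yv_nonneg[of "(a, b, c)"] by (simp add: Wt_def)
    have th1: "\<theta> ^ n \<le> 1" using theta_pos theta_lt1 by (simp add: power_le_one)
    have "W0 * \<theta> ^ n \<le> W0 * 1" using W0_ge1 th1 by (intro mult_left_mono) auto
    then have WW: "Wt (a, b, c) \<le> W0" using Wt by simp
    have small: "Wt (a, b, c) * Rr ^ (k - 1) / p \<le> 1"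
    proof -
      have "Wt (a, b, c) * Rr ^ (k - 1) \<le> W0 * Rr ^ (k - 1)" using WW Rrk0 by (rule mult_right_mono)
      also have "\<dots> \<le> p" by (rule cond1)
      finally show ?thesis using p_pos by simp
    qed
    have "norm (DPm m n w h - h) = norm (DPg a b c w h - h)" using False by (simp add: DPm_def X)
    also have "\<dots> \<le> \<kappa> * Rr ^ (k - 1) * Wt (a, b, c) * norm h"
      using DPg_bound[OF nz assms Rr_le1 _ small, of h] Rr_pos by (simp add: \<kappa>_def)
    also have "\<dots> \<le> \<kappa> * Rr ^ (k - 1) * (W0 * \<theta> ^ n) * norm h"
      using Wt kappa_pos Rrk0 by (intro mult_right_mono mult_left_mono) auto
    also have "\<dots> = \<delta> n * norm h" by (simp add: \<delta>_def algebra_simps)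
    finally show ?thesis .
  qed
qed

lemma near_m:
  obtains Vl DV where
      "\<And>x. x \<in> ball 0 (Rr/2) \<Longrightarrow> (\<lambda>n. comp_seq (Pm m) n x) \<longlonglongrightarrow> Vl x"
      "\<And>x. x \<in> ball 0 (Rr/2) \<Longrightarrow> (Vl has_derivative DV x) (at x)"
      "\<And>x. x \<in> ball 0 (Rr/2) \<Longrightarrow> clin (DV x)"
      "\<And>x h. x \<in> ball 0 (Rr/2) \<Longrightarrow> norm (DV x h - h) \<le> 1/2 * norm h"
      "\<And>x n. x \<in> ball 0 (Rr/2) \<Longrightarrow> norm (comp_seq (Pm m) n x) \<le> 3/2 * norm x"
      "\<And>x y. x \<in> ball 0 (Rr/2) \<Longrightarrow> y \<in> ball 0 (Rr/2) \<Longrightarrow> norm ((Vl x - x) - (Vl y - y)) \<le> 1/2 * norm (x - y)"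
      "\<And>y. norm y < Rr/8 \<Longrightarrow> \<exists>x\<in>ball 0 (Rr/2). Vl x = y"
  apply (rule near_id[where R=Rr and P="Pm m" and DP="DPm m" and \<delta>=\<delta>])
  apply (rule Rr_pos)
  apply (rule Pm0)
  apply (rule Pm_deriv)
  apply (rule DPm_clin)
  apply (erule DPm_bound)
  apply (rule delta_summable)
  apply (rule delta_sum)
  apply (rule delta_nonneg)
  apply (rule that)
  apply assumption+
  done

end


context bsetup begin

definition DF :: "complex \<times> complex \<Rightarrow> complex \<times> complex \<Rightarrow> complex \<times> complex" where
  "DF z h = (\<alpha> * fst h + 2 * snd z * snd h, \<beta> * snd h)"
definition DG :: "complex \<times> complex \<Rightarrow> complex \<times> complex \<Rightarrow> complex \<times> complex" where
  "DG z h = (\<beta> * fst h, \<alpha> * snd h + of_nat k * (fst z) ^ (k - 1) * fst h)"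

lemma F_deriv: "(F has_derivative DF z) (at z)"
  unfolding F_eq DF_def[abs_def]
  by (auto intro!: derivative_eq_intros simp: fun_eq_iff algebra_simps)

lemma G_deriv: "(G has_derivative DG z) (at z)"
  unfolding G_eq DG_def[abs_def]
  by (auto intro!: derivative_eq_intros simp: fun_eq_iff algebra_simps)

lemma DF_clin: "clin (DF z)" unfolding clin_def by (simp add: DF_def cscale2_def algebra_simps)
lemma DG_clin: "clin (DG z)" unfolding clin_def by (simp add: DG_def cscale2_def algebra_simps)

lemma DF_inj: "inj (DF z)"
proof (rule injI)
  fix x y assume "DF z x = DF z y"
  then have 1: "\<alpha> * fst x + 2 * snd z * snd x = \<alpha> * fst y + 2 * snd z * snd y" and 2: "\<beta> * snd x = \<beta> * snd y"
    by (auto simp: DF_def)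
  from 2 have s: "snd x = snd y" using beta_nz by simp
  with 1 have "fst x = fst y" using alpha_nz by simp
  with s show "x = y" by (simp add: prod_eq_iff)
qed

lemma DG_inj: "inj (DG z)"
proof (rule injI)
  fix x y assume "DG z x = DG z y"
  then have 1: "\<beta> * fst x = \<beta> * fst y" and 2: "\<alpha> * snd x + of_nat k * (fst z) ^ (k - 1) * fst x = \<alpha> * snd y + of_nat k * (fst z) ^ (k - 1) * fst y"
    by (auto simp: DG_def)
  from 1 have s: "fst x = fst y" using beta_nz by simp
  with 2 have "snd x = snd y" using alpha_nz by simp
  with s show "x = y" by (simp add: prod_eq_iff)
qed

lemma fs_deriv:
  assumes "n \<ge> 1"
  shows "\<exists>D. (fs n has_derivative D) (at z) \<and> clin D \<and> inj D"
  using fsFG[OF assms] F_deriv G_deriv DF_clin DG_clin DF_inj DG_inj by metis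

lemma comp_deriv: "\<exists>D. (comp_seq fs m has_derivative D) (at z) \<and> clin D \<and> inj D"
proof (induction m arbitrary: z)
  case 0 then show ?case using clin_id by (auto intro!: exI[of _ id] has_derivative_ident simp: id_def)
next
  case (Suc m)
  obtain D1 where D1: "(comp_seq fs m has_derivative D1) (at z)" "clin D1" "inj D1" using Suc by blast
  obtain D2 where D2: "(fs (Suc m) has_derivative D2) (at (comp_seq fs m z))" "clin D2" "inj D2"
    using fs_deriv[of "Suc m" "comp_seq fs m z"] by auto
  have "((\<lambda>x. fs (Suc m) (comp_seq fs m x)) has_derivative (\<lambda>x. D2 (D1 x))) (at z)"
    by (rule has_derivative_compose[OF D1(1) D2(1)])
  then have "(comp_seq fs (Suc m) has_derivative D2 \<circ> D1) (at z)" by (simp add: o_def)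
  moreover have "clin (D2 \<circ> D1)" using D1 D2 by (simp add: clin_comp)
  moreover have "inj (D2 \<circ> D1)" using D1 D2 by (simp add: inj_compose)
  ultimately show ?case by blast
qed

lemma comp_cont: "continuous_on UNIV (comp_seq fs m)"
proof (rule continuous_at_imp_continuous_on, rule ballI)
  fix z :: "complex \<times> complex"
  obtain D where "(comp_seq fs m has_derivative D) (at z)" using comp_deriv by blast
  then show "isCont (comp_seq fs m) z" by (rule has_derivative_continuous)
qed

lemma F_bij: "bij F"
proof (rule bijI)
  show "inj F"
  proof (rule injI)
    fix x y assume "F x = F y"
    then have 1: "\<alpha> * fst x + (snd x)^2 = \<alpha> * fst y + (snd y)^2" and 2: "\<beta> * snd x = \<beta> * snd y"
      by (auto simp: F_eq)
    from 2 have s: "snd x = snd y" using beta_nz by simp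
    with 1 have "fst x = fst y" using alpha_nz by simp
    with s show "x = y" by (simp add: prod_eq_iff)
  qed
  show "surj F"
  proof (rule surjI)
    fix u :: "complex \<times> complex"
    show "F ((fst u - (snd u / \<beta>)^2) / \<alpha>, snd u / \<beta>) = u"
      using alpha_nz beta_nz by (simp add: F_eq prod_eq_iff)
  qed
qed

lemma G_bij: "bij G"
proof (rule bijI)
  show "inj G"
  proof (rule injI)
    fix x y assume "G x = G y"
    then have 1: "\<beta> * fst x = \<beta> * fst y" and 2: "\<alpha> * snd x + (fst x)^k = \<alpha> * snd y + (fst y)^k"
      by (auto simp: G_eq)
    from 1 have s: "fst x = fst y" using beta_nz by simp
    with 2 have "snd x = snd y" using alpha_nz by simp
    with s show "x = y" by (simp add: prod_eq_iff)
  qed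
  show "surj G"
  proof (rule surjI)
    fix u :: "complex \<times> complex"
    show "G (fst u / \<beta>, (snd u - (fst u / \<beta>)^k) / \<alpha>) = u"
      using alpha_nz beta_nz by (simp add: G_eq prod_eq_iff)
  qed
qed

lemma comp_bij: "bij (comp_seq fs m)"
proof (induction m)
  case 0 then show ?case using bij_id by (simp add: id_def)
next
  case (Suc m)
  have "bij (fs (Suc m))" using fsFG[of "Suc m"] F_bij G_bij by auto
  then have "bij (fs (Suc m) \<circ> comp_seq fs m)" using Suc by (rule bij_comp[rotated])
  then show ?case by (simp only: comp_seq.simps)
qed

lemma Nmap_bound2: "norm (Nmap X w) \<le> Mt X * (1 + norm w) ^ 2"
proof -
  obtain a b c where X: "X = (a, b, c)" by (metis prod_cases3)
  have v1: "cmod (fst w) \<le> (1 + norm w) ^ 2"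
  proof -
    have "cmod (fst w) \<le> norm w" using norm_fst_le[of "fst w" "snd w"] by simp
    also have "\<dots> \<le> (1 + norm w) ^ 2" by (simp add: power2_eq_square algebra_simps)
    finally show ?thesis .
  qed
  have v2: "cmod (snd w) \<le> (1 + norm w) ^ 2"
  proof -
    have "cmod (snd w) \<le> norm w" using norm_snd_le[of "snd w" "fst w"] by simp
    also have "\<dots> \<le> (1 + norm w) ^ 2" by (simp add: power2_eq_square algebra_simps)
    finally show ?thesis .
  qed
  have v22: "cmod (snd w) ^ 2 \<le> (1 + norm w) ^ 2"
  proof -
    have "cmod (snd w) \<le> 1 + norm w" using norm_snd_le[of "snd w" "fst w"] by simp
    then show ?thesis by (intro power_mono) auto
  qed
  have "norm (Nmap X w) \<le> cmod (a * fst w + c * (snd w) ^ 2) + cmod (b * snd w)"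
    using norm_Pair_le by (simp add: Nmap_def X)
  also have "\<dots> \<le> cmod a * cmod (fst w) + cmod c * cmod (snd w) ^ 2 + cmod b * cmod (snd w)"
    using norm_triangle_ineq[of "a * fst w" "c * (snd w) ^ 2"] by (simp add: norm_mult norm_power)
  also have "\<dots> \<le> cmod a * (1 + norm w) ^ 2 + cmod c * (1 + norm w) ^ 2 + cmod b * (1 + norm w) ^ 2"
    by (intro add_mono mult_left_mono v1 v2 v22) auto
  also have "\<dots> \<le> Mt X * (1 + norm w) ^ 2"
  proof -
    have "cmod c \<le> Yv X" using lam_pos by (simp add: Yv_def X)
    then have "cmod a + cmod c + cmod b \<le> Mt X" by (simp add: Mt_def X)
    then show ?thesis by (simp add: distrib_right[symmetric] mult_right_mono)
  qed
  finally show ?thesis .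
qed

lemma Mt_lim: "(\<lambda>n. Mt (par m n)) \<longlonglongrightarrow> 0"
proof (rule Lim_null_comparison)
  show "\<forall>\<^sub>F n in sequentially. norm (Mt (par m n)) \<le> (2 + lam) * p ^ n"
  proof (rule always_eventually, rule allI)
    fix n
    have "Mt (par m n) \<ge> 0" using Yv_nonneg[of "par m n"] by (cases "par m n") (simp add: Mt_def)
    then show "norm (Mt (par m n)) \<le> (2 + lam) * p ^ n" using Mt_par[of m n] by simp
  qed
  show "(\<lambda>n. (2 + lam) * p ^ n) \<longlonglongrightarrow> 0"
    using p_pos p_lt1 by (intro tendsto_mult_right_zero LIMSEQ_power_zero) simp
qed

lemma Nmap_lim: "(\<lambda>n. Nmap (par m n) w) \<longlonglongrightarrow> 0"
proof (rule Lim_null_comparison)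
  show "\<forall>\<^sub>F n in sequentially. norm (Nmap (par m n) w) \<le> Mt (par m n) * (1 + norm w) ^ 2"
    by (rule always_eventually, rule allI, rule Nmap_bound2)
  show "(\<lambda>n. Mt (par m n) * (1 + norm w) ^ 2) \<longlonglongrightarrow> 0"
    using Mt_lim[of m] by (rule tendsto_mult_left_zero)
qed

lemma orbit_zero:
  assumes x: "x \<in> ball 0 (Rr/2)"
  shows "(\<lambda>n. comp_seq (sh m) n x) \<longlonglongrightarrow> 0"
proof -
  obtain Vl DV where c5: "\<And>x n. x \<in> ball 0 (Rr/2) \<Longrightarrow> norm (comp_seq (Pm m) n x) \<le> 3/2 * norm x"
    using near_m[of m] by blast
  show ?thesis
  proof (rule Lim_null_comparison)
    show "\<forall>\<^sub>F n in sequentially. norm (comp_seq (sh m) n x) \<le> Mt (par m n)"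
    proof (rule always_eventually, rule allI)
      fix n
      have eq: "comp_seq (sh m) n x = Nmap (par m n) (comp_seq (Pm m) n x)"
        using V_eq[of m n x] par_NNinv[of m n] by simp
      have "norm x < Rr/2" using x by simp
      then have "norm (comp_seq (Pm m) n x) \<le> 1"
        using c5[OF x, of n] Rr_le1 by linarith
      then show "norm (comp_seq (sh m) n x) \<le> Mt (par m n)" unfolding eq by (rule Nmap_bound)
    qed
    show "(\<lambda>n. Mt (par m n)) \<longlonglongrightarrow> 0" by (rule Mt_lim)
  qed
qed

abbreviation "\<Omega> \<equiv> nonaut_basin fs"

lemma in_Omega:
  assumes "norm (comp_seq fs m z) < Rr/2"
  shows "z \<in> \<Omega>"
proof -
  have x: "comp_seq fs m z \<in> ball 0 (Rr/2)" using assms by simp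
  have "(\<lambda>n. comp_seq fs (n + m) z) \<longlonglongrightarrow> 0"
    using orbit_zero[OF x, of m] by (simp add: comp_shift[symmetric] add.commute)
  then have "(\<lambda>n. comp_seq fs n z) \<longlonglongrightarrow> 0" by (rule LIMSEQ_offset)
  then show ?thesis by (simp add: nonaut_basin_def)
qed

lemma Omega_ev:
  assumes "z \<in> \<Omega>"
  shows "\<exists>M. \<forall>m\<ge>M. norm (comp_seq fs m z) < Rr/2"
proof -
  have "(\<lambda>n. comp_seq fs n z) \<longlonglongrightarrow> 0" using assms by (simp add: nonaut_basin_def)
  then have "(\<lambda>n. norm (comp_seq fs n z)) \<longlonglongrightarrow> 0" by (rule tendsto_norm_zero)
  then have "\<forall>\<^sub>F n in sequentially. norm (comp_seq fs n z) < Rr/2"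
    using Rr_pos by (intro order_tendstoD) auto
  then show ?thesis by (simp add: eventually_sequentially)
qed

lemma Omega_eq: "\<Omega> = (\<Union>m. comp_seq fs m -` ball 0 (Rr/2))"
proof
  show "\<Omega> \<subseteq> (\<Union>m. comp_seq fs m -` ball 0 (Rr/2))"
  proof
    fix z assume "z \<in> \<Omega>"
    then obtain M where "\<forall>m\<ge>M. norm (comp_seq fs m z) < Rr/2" using Omega_ev by blast
    then show "z \<in> (\<Union>m. comp_seq fs m -` ball 0 (Rr/2))" by auto
  qed
  show "(\<Union>m. comp_seq fs m -` ball 0 (Rr/2)) \<subseteq> \<Omega>"
  proof
    fix z assume "z \<in> (\<Union>m. comp_seq fs m -` ball 0 (Rr/2))"
    then obtain m where "comp_seq fs m z \<in> ball 0 (Rr/2)" by blast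
    then have "norm (comp_seq fs m z) < Rr/2" by simp
    then show "z \<in> \<Omega>" by (rule in_Omega)
  qed
qed

lemma Omega_open: "open \<Omega>"
proof -
  have "open (comp_seq fs m -` ball 0 (Rr/2))" for m
  proof (rule continuous_open_vimage)
    show "open (ball (0::complex\<times>complex) (Rr/2))" by simp
    fix z show "continuous (at z) (comp_seq fs m)"
      using comp_cont[of m] continuous_on_eq_continuous_at by blast
  qed
  then show ?thesis unfolding Omega_eq by blast
qed

end


context bsetup begin

lemma Ninv_tendsto:
  assumes "a \<noteq> 0" "b \<noteq> 0" "f \<longlonglongrightarrow> l"
  shows "(\<lambda>n. Ninv (a, b, c) (f n)) \<longlonglongrightarrow> Ninv (a, b, c) l"
  unfolding Ninv_def using assms by (auto intro!: tendsto_intros)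

lemma Ninv_par_tendsto:
  assumes "f \<longlonglongrightarrow> l"
  shows "(\<lambda>n. Ninv (par m j) (f n)) \<longlonglongrightarrow> Ninv (par m j) l"
proof -
  obtain a b c where X: "par m j = (a, b, c)" by (metis prod_cases3)
  have nz: "a \<noteq> 0" "b \<noteq> 0" using par_nz[of m j] X by auto
  show ?thesis unfolding X by (rule Ninv_tendsto[OF nz assms])
qed

definition DN :: "params \<Rightarrow> complex \<times> complex \<Rightarrow> complex \<times> complex \<Rightarrow> complex \<times> complex" where
  "DN X w h = (case X of (a, b, c) \<Rightarrow> ((fst h - c / b ^ 2 * (2 * snd w * snd h)) / a, snd h / b))"

lemma Ninv_deriv:
  assumes "a \<noteq> 0" "b \<noteq> 0"
  shows "(Ninv (a, b, c) has_derivative DN (a, b, c) w) (at w)"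
  unfolding Ninv_def[abs_def] DN_def[abs_def]
  using assms by (auto intro!: derivative_eq_intros simp: fun_eq_iff field_simps)

lemma DN_clin: "clin (DN X w)"
  unfolding clin_def by (cases X) (simp add: DN_def cscale2_def field_simps)

lemma DN_inj:
  assumes "a \<noteq> 0" "b \<noteq> 0"
  shows "inj (DN (a, b, c) w)"
proof (rule injI)
  fix x y assume "DN (a, b, c) w x = DN (a, b, c) w y"
  then have 1: "(fst x - c / b ^ 2 * (2 * snd w * snd x)) / a = (fst y - c / b ^ 2 * (2 * snd w * snd y)) / a"
    and 2: "snd x / b = snd y / b" by (auto simp: DN_def)
  from 2 have s: "snd x = snd y" using assms by simp
  with 1 have "fst x = fst y" using assms by simp
  with s show "x = y" by (simp add: prod_eq_iff)
qed

lemma Ninv_par_deriv: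
  "\<exists>D. (Ninv (par m j) has_derivative D) (at w) \<and> clin D \<and> inj D"
proof -
  obtain a b c where X: "par m j = (a, b, c)" by (metis prod_cases3)
  have nz: "a \<noteq> 0" "b \<noteq> 0" using par_nz[of m j] X by auto
  show ?thesis unfolding X using Ninv_deriv[OF nz] DN_clin DN_inj[OF nz] by blast
qed

lemma near_id_inj:
  assumes "bounded_linear L" "\<And>h. norm (L h - h) \<le> 1/2 * norm h"
  shows "inj L"
proof (rule injI)
  fix x y assume "L x = L y"
  then have "L (x - y) = 0" using assms(1) by (simp add: linear_simps)
  then have "norm (x - y) \<le> 1/2 * norm (x - y)" using assms(2)[of "x - y"] by (simp add: norm_minus_commute)
  then show "x = y" by simp
qed

definition Phi :: "complex \<times> complex \<Rightarrow> complex \<times> complex" where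
  "Phi z = lim (\<lambda>n. Ninv (par 0 n) (comp_seq fs n z))"

lemma Phi_local:
  assumes x: "comp_seq fs m z \<in> ball 0 (Rr/2)"
    and c1: "\<And>x. x \<in> ball 0 (Rr/2) \<Longrightarrow> (\<lambda>n. comp_seq (Pm m) n x) \<longlonglongrightarrow> Vl x"
  shows "Phi z = Ninv (par 0 m) (Vl (comp_seq fs m z))"
proof -
  define x where "x = comp_seq fs m z"
  have eq: "Ninv (par 0 (n + m)) (comp_seq fs (n + m) z) = Ninv (par 0 m) (comp_seq (Pm m) n x)" for n
  proof -
    have "Ninv (par 0 (n + m)) (comp_seq fs (n + m) z) = Ninv (par 0 (m + n)) (comp_seq fs (m + n) z)"
      by (simp add: add.commute)
    also have "\<dots> = Ninv (par 0 m) (Ninv (par m n) (comp_seq (sh m) n x))"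
      by (simp add: Ninv_par_comp comp_shift x_def)
    also have "\<dots> = Ninv (par 0 m) (comp_seq (Pm m) n x)" by (simp add: V_eq)
    finally show ?thesis .
  qed
  have "(\<lambda>n. Ninv (par 0 m) (comp_seq (Pm m) n x)) \<longlonglongrightarrow> Ninv (par 0 m) (Vl x)"
    using c1[OF x[folded x_def]] by (rule Ninv_par_tendsto)
  then have "(\<lambda>n. Ninv (par 0 (n + m)) (comp_seq fs (n + m) z)) \<longlonglongrightarrow> Ninv (par 0 m) (Vl x)"
    by (simp add: eq)
  then have "(\<lambda>n. Ninv (par 0 n) (comp_seq fs n z)) \<longlonglongrightarrow> Ninv (par 0 m) (Vl x)"
    by (rule LIMSEQ_offset)
  then show ?thesis unfolding Phi_def x_def by (rule limI)
qed

lemma Phi_deriv: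
  assumes z: "z \<in> \<Omega>"
  shows "\<exists>D. (Phi has_derivative D) (at z) \<and> clin D \<and> inj D"
proof -
  obtain m where m: "norm (comp_seq fs m z) < Rr/2" using Omega_ev[OF z] by blast
  define x where "x = comp_seq fs m z"
  have xb: "x \<in> ball 0 (Rr/2)" using m by (simp add: x_def)
  obtain Vl DV where
      c1: "\<And>x. x \<in> ball 0 (Rr/2) \<Longrightarrow> (\<lambda>n. comp_seq (Pm m) n x) \<longlonglongrightarrow> Vl x" and
      c2: "\<And>x. x \<in> ball 0 (Rr/2) \<Longrightarrow> (Vl has_derivative DV x) (at x)" and
      c3: "\<And>x. x \<in> ball 0 (Rr/2) \<Longrightarrow> clin (DV x)" and
      c4: "\<And>x h. x \<in> ball 0 (Rr/2) \<Longrightarrow> norm (DV x h - h) \<le> 1/2 * norm h"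
    using near_m[of m] by metis
  obtain Dc where Dc: "(comp_seq fs m has_derivative Dc) (at z)" "clin Dc" "inj Dc"
    using comp_deriv by blast
  obtain DNv where DNv: "(Ninv (par 0 m) has_derivative DNv) (at (Vl x))" "clin DNv" "inj DNv"
    using Ninv_par_deriv by blast
  have d1: "((\<lambda>y. Vl (comp_seq fs m y)) has_derivative (\<lambda>y. DV x (Dc y))) (at z)"
    using has_derivative_compose[OF Dc(1), of Vl "DV x"] c2[OF xb] by (simp add: x_def)
  have d2: "((\<lambda>y. Ninv (par 0 m) (Vl (comp_seq fs m y))) has_derivative (\<lambda>y. DNv (DV x (Dc y)))) (at z)"
    using has_derivative_compose[OF d1 DNv(1)[unfolded x_def]] by (simp add: x_def)
  define U where "U = comp_seq fs m -` ball 0 (Rr/2)"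
  have Uo: "open U" unfolding U_def
  proof (rule continuous_open_vimage)
    show "open (ball (0::complex\<times>complex) (Rr/2))" by simp
    fix z show "continuous (at z) (comp_seq fs m)"
      using comp_cont[of m] continuous_on_eq_continuous_at by blast
  qed
  have zU: "z \<in> U" using xb by (simp add: U_def x_def)
  have eqU: "Ninv (par 0 m) (Vl (comp_seq fs m y)) = Phi y" if "y \<in> U" for y
    using Phi_local[of m y Vl, OF _ c1] that by (simp add: U_def)
  have dPhi: "(Phi has_derivative (\<lambda>y. DNv (DV x (Dc y)))) (at z)"
    by (rule has_derivative_transform_within_open[OF d2 Uo zU eqU])
  have "(\<lambda>y. DNv (DV x (Dc y))) = DNv \<circ> DV x \<circ> Dc" by (simp add: o_def)
  moreover have "clin (DNv \<circ> DV x \<circ> Dc)" using DNv(2) c3[OF xb] Dc(2) by (simp add: clin_comp)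
  moreover have "inj (DNv \<circ> DV x \<circ> Dc)"
  proof -
    have "inj (DV x)"
      using near_id_inj[OF has_derivative_bounded_linear[OF c2[OF xb]] c4[OF xb]] .
    then show ?thesis using DNv(3) Dc(3) by (simp add: inj_compose)
  qed
  ultimately show ?thesis using dPhi by metis
qed

lemma Ninv_par_inj: "Ninv (par m j) u = Ninv (par m j) v \<Longrightarrow> u = v"
  by (metis par_NNinv)

lemma Phi_inj: "inj_on Phi \<Omega>"
proof (rule inj_onI)
  fix z z' assume z: "z \<in> \<Omega>" and z': "z' \<in> \<Omega>" and eq: "Phi z = Phi z'"
  obtain M1 where M1: "\<forall>m\<ge>M1. norm (comp_seq fs m z) < Rr/2" using Omega_ev[OF z] by blast
  obtain M2 where M2: "\<forall>m\<ge>M2. norm (comp_seq fs m z') < Rr/2" using Omega_ev[OF z'] by blast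
  define m where "m = max M1 M2"
  define x where "x = comp_seq fs m z"
  define x' where "x' = comp_seq fs m z'"
  have xb: "x \<in> ball 0 (Rr/2)" using M1 by (simp add: x_def m_def)
  have xb': "x' \<in> ball 0 (Rr/2)" using M2 by (simp add: x'_def m_def)
  obtain Vl DV where
      c1: "\<And>x. x \<in> ball 0 (Rr/2) \<Longrightarrow> (\<lambda>n. comp_seq (Pm m) n x) \<longlonglongrightarrow> Vl x" and
      c6: "\<And>x y. x \<in> ball 0 (Rr/2) \<Longrightarrow> y \<in> ball 0 (Rr/2) \<Longrightarrow> norm ((Vl x - x) - (Vl y - y)) \<le> 1/2 * norm (x - y)"
    using near_m[of m] by metis
  have "Ninv (par 0 m) (Vl x) = Ninv (par 0 m) (Vl x')"
    using eq Phi_local[of m z Vl, OF xb[unfolded x_def] c1] Phi_local[of m z' Vl, OF xb'[unfolded x'_def] c1]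
    by (simp add: x_def x'_def)
  then have "Vl x = Vl x'" by (rule Ninv_par_inj)
  then have "norm (x' - x) \<le> 1/2 * norm (x - x')" using c6[OF xb xb'] by simp
  then have "x = x'" by (simp add: norm_minus_commute)
  moreover have "inj (comp_seq fs m)" using comp_bij[of m] by (simp add: bij_def)
  ultimately show "z = z'" by (simp add: x_def x'_def inj_eq)
qed

lemma Phi_surj: "Phi ` \<Omega> = UNIV"
proof -
  have "w \<in> Phi ` \<Omega>" for w
  proof -
    have "(\<lambda>m. norm (Nmap (par 0 m) w)) \<longlonglongrightarrow> 0" using Nmap_lim[of 0 w] by (rule tendsto_norm_zero)
    then have "\<forall>\<^sub>F m in sequentially. norm (Nmap (par 0 m) w) < Rr/8"
      using Rr_pos by (intro order_tendstoD) auto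
    then obtain m where m: "norm (Nmap (par 0 m) w) < Rr/8"
      by (auto simp: eventually_sequentially)
    obtain Vl DV where
      c1: "\<And>x. x \<in> ball 0 (Rr/2) \<Longrightarrow> (\<lambda>n. comp_seq (Pm m) n x) \<longlonglongrightarrow> Vl x" and
      c7: "\<And>y. norm y < Rr/8 \<Longrightarrow> \<exists>x\<in>ball 0 (Rr/2). Vl x = y"
      using near_m[of m] by metis
    obtain x where xb: "x \<in> ball 0 (Rr/2)" and xV: "Vl x = Nmap (par 0 m) w" using c7[OF m] by blast
    obtain z where zx: "comp_seq fs m z = x" using comp_bij[of m] by (metis bij_pointE)
    have zO: "z \<in> \<Omega>" using in_Omega[of m z] xb zx by simp
    have "Phi z = Ninv (par 0 m) (Vl x)" using Phi_local[of m z Vl, OF _ c1] xb zx by simp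
    also have "\<dots> = w" by (simp add: xV par_NinvN)
    finally show ?thesis using zO by blast
  qed
  then show ?thesis by blast
qed

end


context bsetup begin

lemma Phi_cont: "continuous_on \<Omega> Phi"
proof (rule continuous_at_imp_continuous_on, rule ballI)
  fix z assume "z \<in> \<Omega>"
  then obtain D where "(Phi has_derivative D) (at z)" using Phi_deriv by blast
  then show "isCont Phi z" by (rule has_derivative_continuous)
qed

lemma main: "biholomorphic_to_C2 \<Omega>"
  unfolding biholomorphic_to_C2_def
proof (intro conjI exI[of _ Phi])
  show "open \<Omega>" by (rule Omega_open)
  show "bij_betw Phi \<Omega> UNIV" using Phi_inj Phi_surj by (simp add: bij_betw_def)
  show "holomorphic2_on Phi \<Omega>"
    unfolding holomorphic2_on_def
  proof
    fix z assume "z \<in> \<Omega>"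
    then obtain D where "(Phi has_derivative D) (at z)" "clin D" using Phi_deriv by blast
    then show "\<exists>D. (Phi has_derivative D) (at z) \<and> (\<forall>c w. D (cscale2 c w) = cscale2 c (D w))"
      unfolding clin_def by blast
  qed
  show "holomorphic2_on (inv_into \<Omega> Phi) UNIV"
    unfolding holomorphic2_on_def
  proof
    fix y :: "complex \<times> complex"
    define z where "z = inv_into \<Omega> Phi y"
    have yim: "y \<in> Phi ` \<Omega>" using Phi_surj by simp
    have zO: "z \<in> \<Omega>" unfolding z_def by (rule inv_into_into[OF yim])
    have yz: "Phi z = y" unfolding z_def by (rule f_inv_into_f[OF yim])
    obtain D where D: "(Phi has_derivative D) (at z)" "clin D" "inj D" using Phi_deriv[OF zO] by blast
    have lin: "linear D" using has_derivative_bounded_linear[OF D(1)] by (rule bounded_linear.linear)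
    have sD: "surj D" using linear_injective_imp_surjective[OF lin D(3)] by simp
    have id: "D \<circ> inv D = id" using sD by (simp add: surj_iff)
    have gf: "\<And>x. x \<in> \<Omega> \<Longrightarrow> inv_into \<Omega> Phi (Phi x) = x" using Phi_inj by (simp add: inv_into_f_f)
    have "(inv_into \<Omega> Phi has_derivative inv D) (at (Phi z))"
      by (rule has_derivative_inverse_strong[OF Omega_open zO Phi_cont gf D(1) id])
    then have dinv: "(inv_into \<Omega> Phi has_derivative inv D) (at y)" using yz by simp
    have "inv D (cscale2 c w) = cscale2 c (inv D w)" for c w
    proof -
      have "D (inv D (cscale2 c w)) = cscale2 c w" using sD by (simp add: surj_f_inv_f)
      moreover have "D (cscale2 c (inv D w)) = cscale2 c (D (inv D w))"
        using D(2) unfolding clin_def by blast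
      moreover have "D (inv D w) = w" using sD by (simp add: surj_f_inv_f)
      ultimately show ?thesis using D(3) by (metis injD)
    qed
    then show "\<exists>D. (inv_into \<Omega> Phi has_derivative D) (at y) \<and> (\<forall>c w. D (cscale2 c w) = cscale2 c (D w))"
      using dinv by blast
  qed
qed

end

theorem proposition1p2:
  fixes k :: nat and \<alpha> \<beta> :: complex
    and F G :: "complex \<times> complex \<Rightarrow> complex \<times> complex"
    and fs :: "nat \<Rightarrow> (complex \<times> complex \<Rightarrow> complex \<times> complex)"
  assumes "k \<ge> 2"
    and "cmod \<alpha> ^ k < cmod \<beta>" and "cmod \<beta> \<le> cmod \<alpha> ^ (k - 1)"
    and "\<And>z1 z2. F (z1, z2) = (\<alpha> * z1 + z2 ^ 2, \<beta> * z2)"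
    and "\<And>z1 z2. G (z1, z2) = (\<beta> * z1, \<alpha> * z2 + z1 ^ k)"
    and "\<And>n. n \<ge> 1 \<Longrightarrow> fs n = F \<or> fs n = G"
  shows "biholomorphic_to_C2 (nonaut_basin fs)"
proof -
  interpret bsetup k \<alpha> \<beta> F G fs
    using assms by (unfold_locales) auto
  show ?thesis by (rule main)
qed


end
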